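(* For every $q\ge 2$, every $n\ge1$ and every $\delta\ge 0$, one has $|\tilde{\mathbb G}^q_{n,\delta}|=2^{\delta}\,|\mathbb G^q_{n,\delta}|$. Equivalently, $\tilde{\mathcal G}_\delta(z)=2^\delta\mathcal G_\delta(z)$, where $\tilde{\mathcal G}_\delta(z)=\sum_n|\tilde{\mathbb G}^q_{n,\delta}|z^n$ and $\mathcal G_\delta(z)=\sum_n|\mathbb G^q_{n,\delta}|z^n$.
   Context: Fix an integer $q\ge 2$. A $(q+1)$-edge-colored graph (colored graph) is a finite connected graph, multiple edges allowed and no loops, whose edges carry colors in $\{0,1,\dots,q\}$ such that every vertex is incident to exactly one edge of each color. It is rooted if one color-0 edge is distinguished and oriented; it is bipartite if its vertices can be colored black and white so that every edge joins a black and a white vertex, with the convention that the origin of the root edge is black. $\tilde{\mathbb G}^q$ denotes the set of rooted colored graphs and $\mathbb G^q\subset\tilde{\mathbb G}^q$ the set of bipartite ones. For $i\in\{1,\dots,q\}$, a color-$0i$ cycle of $G$ is a connected component of the subgraph formed by the edges of colors $0$ and $i$; $F_0(G)$ is the total number of color-$0i$ cycles over all $i\in\{1,\dots,q\}$. The order of $G$ is $\delta_0(G)=1+\frac{q-1}{2}V(G)-F_0(G)$, where $V(G)$ is the number of vertices. $\mathbb G^q_{n,\delta}$ (resp. $\tilde{\mathbb G}^q_{n,\delta}$) is the set of graphs in $\mathbb G^q$ (resp. $\tilde{\mathbb G}^q$) with $2n$ vertices and order $\delta$. *)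

theory Defs
  imports Main
begin

text \<open>A (q+1)-edge-colored graph on the vertex set {0..<V} is encoded by its colour
classes: for each colour c \<le> q the edges of colour c form a perfect matching,
i.e. a fixed-point-free involution \<sigma> c of {0..<V} (no loops; parallel edges of
different colours are allowed).  Outside the vertex set and for colours > q the
maps are the identity, so that the encoding is unique.\<close>

definition perfect_matching :: "nat \<Rightarrow> (nat \<Rightarrow> nat) \<Rightarrow> bool" where
  "perfect_matching V f \<longleftrightarrow>
     (\<forall>x<V. f x < V \<and> f x \<noteq> x \<and> f (f x) = x) \<and> (\<forall>x. V \<le> x \<longrightarrow> f x = x)"

definition cg_edges :: "nat \<Rightarrow> nat \<Rightarrow> (nat \<Rightarrow> nat \<Rightarrow> nat) \<Rightarrow> (nat \<times> nat) set" where
  "cg_edges q V \<sigma> = {(x, \<sigma> c x) | x c. x < V \<and> c \<le> q}"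

definition cg_connected :: "nat \<Rightarrow> nat \<Rightarrow> (nat \<Rightarrow> nat \<Rightarrow> nat) \<Rightarrow> bool" where
  "cg_connected q V \<sigma> \<longleftrightarrow> (\<forall>x<V. \<forall>y<V. (x, y) \<in> (cg_edges q V \<sigma>)\<^sup>*)"

definition colored_graph :: "nat \<Rightarrow> nat \<Rightarrow> (nat \<Rightarrow> nat \<Rightarrow> nat) \<Rightarrow> bool" where
  "colored_graph q V \<sigma> \<longleftrightarrow>
     0 < V \<and> (\<forall>c\<le>q. perfect_matching V (\<sigma> c)) \<and> (\<forall>c. q < c \<longrightarrow> \<sigma> c = id) \<and>
     cg_connected q V \<sigma>"

definition cg_bipartite :: "nat \<Rightarrow> nat \<Rightarrow> (nat \<Rightarrow> nat \<Rightarrow> nat) \<Rightarrow> bool" where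
  "cg_bipartite q V \<sigma> \<longleftrightarrow> (\<exists>black :: nat \<Rightarrow> bool. \<forall>c\<le>q. \<forall>x<V. black (\<sigma> c x) \<noteq> black x)"

definition bicoloured_cycles :: "nat \<Rightarrow> (nat \<Rightarrow> nat \<Rightarrow> nat) \<Rightarrow> nat \<Rightarrow> nat" where
  "bicoloured_cycles V \<sigma> i =
     card ({0..<V} // ({(x, \<sigma> 0 x) | x. x < V} \<union> {(x, \<sigma> i x) | x. x < V})\<^sup>*)"

definition F0 :: "nat \<Rightarrow> nat \<Rightarrow> (nat \<Rightarrow> nat \<Rightarrow> nat) \<Rightarrow> nat" where
  "F0 q V \<sigma> = (\<Sum>i = 1..q. bicoloured_cycles V \<sigma> i)"

text \<open>Order \<delta>_0 = 1 + (q-1)/2 V - F_0 (V is even for colored graphs, so the division is exact).\<close>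
definition cg_order :: "nat \<Rightarrow> nat \<Rightarrow> (nat \<Rightarrow> nat \<Rightarrow> nat) \<Rightarrow> int" where
  "cg_order q V \<sigma> = 1 + ((int q - 1) * int V) div 2 - int (F0 q V \<sigma>)"

text \<open>Rooted graphs: the root is the oriented colour-0 edge from r to \<sigma> 0 r,
determined by its origin r.  Rooted graphs are considered up to colour- and
root-preserving isomorphism.\<close>
definition rooted_iso :: "nat \<Rightarrow> nat \<Rightarrow> ((nat \<Rightarrow> nat \<Rightarrow> nat) \<times> nat) \<Rightarrow> ((nat \<Rightarrow> nat \<Rightarrow> nat) \<times> nat) \<Rightarrow> bool" where
  "rooted_iso q V g h \<longleftrightarrow>
     (\<exists>\<pi>. bij_betw \<pi> {0..<V} {0..<V} \<and> \<pi> (snd g) = snd h \<and>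
          (\<forall>c\<le>q. \<forall>x<V. \<pi> (fst g c x) = fst h c (\<pi> x)))"

definition labelled_rooted :: "nat \<Rightarrow> nat \<Rightarrow> int \<Rightarrow> bool \<Rightarrow> ((nat \<Rightarrow> nat \<Rightarrow> nat) \<times> nat) set" where
  "labelled_rooted q n \<delta> bip =
     {(\<sigma>, r). colored_graph q (2*n) \<sigma> \<and> r < 2*n \<and> cg_order q (2*n) \<sigma> = \<delta> \<and>
              (bip \<longrightarrow> cg_bipartite q (2*n) \<sigma>)}"

definition iso_classes :: "nat \<Rightarrow> nat \<Rightarrow> int \<Rightarrow> bool \<Rightarrow> ((nat \<Rightarrow> nat \<Rightarrow> nat) \<times> nat) set set" where
  "iso_classes q n \<delta> bip =
     labelled_rooted q n \<delta> bip //
       {(g, h). g \<in> labelled_rooted q n \<delta> bip \<and> h \<in> labelled_rooted q n \<delta> bip \<and> rooted_iso q (2*n) g h}"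

definition num_rooted :: "nat \<Rightarrow> nat \<Rightarrow> int \<Rightarrow> nat" where
  "num_rooted q n \<delta> = card (iso_classes q n \<delta> False)"

definition num_bipartite :: "nat \<Rightarrow> nat \<Rightarrow> int \<Rightarrow> nat" where
  "num_bipartite q n \<delta> = card (iso_classes q n \<delta> True)"

end

theory Submission
  imports Defs "HOL-Library.FuncSet" "HOL-Combinatorics.Permutations"
begin

definition col :: "nat \<Rightarrow> (nat \<Rightarrow> nat) \<Rightarrow> nat set \<Rightarrow> bool" where
  "col V f X \<longleftrightarrow> X \<subseteq> {0..<V} \<and> (\<forall>x<V. (x \<in> X) = (f x \<notin> X))"

definition Bm :: "nat \<Rightarrow> (nat \<Rightarrow> nat) \<Rightarrow> nat set" where
  "Bm V m = {x. x < V \<and> x < m x}"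

definition flip :: "nat \<Rightarrow> (nat \<Rightarrow> nat) \<Rightarrow> nat set \<Rightarrow> nat set \<Rightarrow> nat \<Rightarrow> nat" where
  "flip V m X Y y = (if y < V \<and> (y \<in> X) \<noteq> (y \<in> Y) then m y else y)"

lemma pmD: assumes "perfect_matching V f"
  shows "\<And>x. x < V \<Longrightarrow> f x < V" "\<And>x. x < V \<Longrightarrow> f x \<noteq> x" "\<And>x. f (f x) = x"
    "\<And>x. V \<le> x \<Longrightarrow> f x = x"
proof -
  have A: "\<forall>x<V. f x < V \<and> f x \<noteq> x \<and> f (f x) = x" "\<forall>x. V \<le> x \<longrightarrow> f x = x"
    using assms unfolding perfect_matching_def by auto
  show "\<And>x. x < V \<Longrightarrow> f x < V" "\<And>x. x < V \<Longrightarrow> f x \<noteq> x" "\<And>x. V \<le> x \<Longrightarrow> f x = x"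
    using A by auto
  show "\<And>x. f (f x) = x"
  proof -
    fix x show "f (f x) = x" using A by (cases "x < V") auto
  qed
qed

lemma pm_inj: "perfect_matching V f \<Longrightarrow> f x = f y \<Longrightarrow> x = y"
  by (metis pmD(3))

lemma col_Bm: assumes "perfect_matching V m" shows "col V m (Bm V m)"
  unfolding col_def Bm_def
proof (intro conjI allI impI)
  fix x assume x: "x < V"
  note p = pmD[OF assms]
  have "m x \<noteq> x" using p x by auto
  moreover have "m (m x) = x" using p by auto
  ultimately show "(x \<in> {x. x < V \<and> x < m x}) = (m x \<notin> {x. x < V \<and> x < m x})"
    using x p(1) by (metis linorder_neqE_nat mem_Collect_eq order.asym)
qed auto

lemma colD: "col V f X \<Longrightarrow> x < V \<Longrightarrow> (x \<in> X) = (f x \<notin> X)"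
  unfolding col_def by auto

lemma colD2: "col V f X \<Longrightarrow> X \<subseteq> {0..<V}"
  unfolding col_def by auto

context
  fixes V m X Y
  assumes pm: "perfect_matching V m" and cX: "col V m X" and cY: "col V m Y"
begin

lemma diff_m: "x < V \<Longrightarrow> ((m x \<in> X) \<noteq> (m x \<in> Y)) = ((x \<in> X) \<noteq> (x \<in> Y))"
  using colD[OF cX] colD[OF cY] by auto

lemma flip_inv: "flip V m X Y (flip V m X Y y) = y"
  unfolding flip_def using diff_m pmD[OF pm] by auto

lemma flip_m: "flip V m X Y (m y) = m (flip V m X Y y)"
  unfolding flip_def using diff_m pmD[OF pm] by (cases "y < V") auto

lemma flip_lt: "y < V \<Longrightarrow> flip V m X Y y < V"
  unfolding flip_def using pmD[OF pm] by auto

lemma flip_ge: "\<not> y < V \<Longrightarrow> flip V m X Y y = y"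
  unfolding flip_def by auto

lemma flip_cases: "flip V m X Y y = y \<or> flip V m X Y y = m y"
  unfolding flip_def by auto

lemma flip_key: "z < V \<Longrightarrow> (z \<in> Y) = (flip V m X Y z \<in> X)"
  unfolding flip_def using colD[OF cX] by auto

lemma conj_pm: assumes "perfect_matching V t"
  shows "perfect_matching V (flip V m X Y \<circ> t \<circ> flip V m X Y)"
proof -
  note t = pmD[OF assms]
  show ?thesis unfolding perfect_matching_def
  proof (intro conjI allI impI)
    fix x assume x: "x < V"
    show "(flip V m X Y \<circ> t \<circ> flip V m X Y) x < V"
      using x t flip_lt by auto
    show "(flip V m X Y \<circ> t \<circ> flip V m X Y) x \<noteq> x"
      using x t flip_lt flip_inv by (metis comp_apply)
    show "(flip V m X Y \<circ> t \<circ> flip V m X Y) ((flip V m X Y \<circ> t \<circ> flip V m X Y) x) = x"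
      using t flip_inv by simp
  next
    fix x assume "V \<le> x" then show "(flip V m X Y \<circ> t \<circ> flip V m X Y) x = x"
      using t flip_ge by simp
  qed
qed

lemma conj_col: assumes "perfect_matching V t" "col V t X"
  shows "col V (flip V m X Y \<circ> t \<circ> flip V m X Y) Y"
  unfolding col_def
proof (intro conjI allI impI)
  show "Y \<subseteq> {0..<V}" using colD2[OF cY] .
  fix x assume x: "x < V"
  note t = pmD[OF assms(1)]
  have a: "(x \<in> Y) = (flip V m X Y x \<in> X)" using flip_key x by blast
  have b: "(flip V m X Y x \<in> X) = (t (flip V m X Y x) \<notin> X)"
    using colD[OF assms(2)] flip_lt x by blast
  have c: "(t (flip V m X Y x) \<in> X) = (flip V m X Y (t (flip V m X Y x)) \<in> Y)"
    using flip_key[of "flip V m X Y (t (flip V m X Y x))"] flip_inv flip_lt t(1) x by auto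
  show "(x \<in> Y) = ((flip V m X Y \<circ> t \<circ> flip V m X Y) x \<notin> Y)"
    using a b c by simp
qed

end


definition R2 :: "nat \<Rightarrow> (nat \<Rightarrow> nat) \<Rightarrow> (nat \<Rightarrow> nat) \<Rightarrow> (nat \<times> nat) set" where
  "R2 V m t = {(x, m x) | x. x < V} \<union> {(x, t x) | x. x < V}"

lemma bc_R2: "bicoloured_cycles V \<sigma> i = card ({0..<V} // (R2 V (\<sigma> 0) (\<sigma> i))\<^sup>*)"
  unfolding bicoloured_cycles_def R2_def ..

context
  fixes V m X Y
  assumes pm: "perfect_matching V m" and cX: "col V m X" and cY: "col V m Y"
begin

lemma flip_rt: "(y, flip V m X Y y) \<in> (R2 V m t)\<^sup>*"
proof (cases "y < V \<and> (y \<in> X) \<noteq> (y \<in> Y)")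
  case True
  then have "(y, flip V m X Y y) \<in> R2 V m t" unfolding flip_def R2_def by auto
  then show ?thesis by auto
next
  case False
  then show ?thesis unfolding flip_def by auto
qed

lemma R2_conj_sub: assumes "perfect_matching V t"
  shows "R2 V m (flip V m X Y \<circ> t \<circ> flip V m X Y) \<subseteq> (R2 V m t)\<^sup>*"
proof
  fix p assume "p \<in> R2 V m (flip V m X Y \<circ> t \<circ> flip V m X Y)"
  then consider x where "x < V" "p = (x, m x)" | x where "x < V" "p = (x, flip V m X Y (t (flip V m X Y x)))"
    unfolding R2_def by auto
  then show "p \<in> (R2 V m t)\<^sup>*"
  proof cases
    case 1 then show ?thesis unfolding R2_def by auto
  next
    case 2
    have a: "(x, flip V m X Y x) \<in> (R2 V m t)\<^sup>*" by (rule flip_rt)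
    have b: "(flip V m X Y x, t (flip V m X Y x)) \<in> R2 V m t"
      unfolding R2_def using flip_lt[OF pm cX cY] 2 by auto
    have c: "(t (flip V m X Y x), flip V m X Y (t (flip V m X Y x))) \<in> (R2 V m t)\<^sup>*" by (rule flip_rt)
    show ?thesis using a b c 2 by (meson rtrancl_into_rtrancl rtrancl_trans)
  qed
qed

lemma flip_conj_conj: "flip V m X Y \<circ> (flip V m X Y \<circ> t \<circ> flip V m X Y) \<circ> flip V m X Y = t"
  using flip_inv[OF pm cX cY] by (auto simp: fun_eq_iff)

lemma R2_conj: assumes "perfect_matching V t"
  shows "(R2 V m (flip V m X Y \<circ> t \<circ> flip V m X Y))\<^sup>* = (R2 V m t)\<^sup>*"
proof
  show "(R2 V m (flip V m X Y \<circ> t \<circ> flip V m X Y))\<^sup>* \<subseteq> (R2 V m t)\<^sup>*"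
    using R2_conj_sub[OF assms] by (rule rtrancl_subset_rtrancl)
  have "R2 V m t \<subseteq> (R2 V m (flip V m X Y \<circ> t \<circ> flip V m X Y))\<^sup>*"
    using R2_conj_sub[OF conj_pm[OF pm cX cY assms]] flip_conj_conj by simp
  then show "(R2 V m t)\<^sup>* \<subseteq> (R2 V m (flip V m X Y \<circ> t \<circ> flip V m X Y))\<^sup>*"
    by (rule rtrancl_subset_rtrancl)
qed

end

lemma col_exists:
  assumes pm: "perfect_matching V m" and pt: "perfect_matching V t"
  shows "\<exists>Y. col V m Y \<and> col V t Y"
  using pt
proof (induction "card {x. x < V \<and> t x \<noteq> m x}" arbitrary: t rule: less_induct)
  case less
  note m = pmD[OF pm]
  note tt = pmD[OF less.prems]
  show ?case
  proof (cases "\<exists>x<V. t x \<noteq> m x")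
    case False
    then have "t = m" using m tt by (metis ext not_le)
    then show ?thesis using col_Bm[OF pm] by auto
  next
    case True
    then obtain x where x: "x < V" "t x \<noteq> m x" by auto
    define u where "u = m x"
    define y where "y = t x"
    define w where "w = t u"
    have uV: "u < V" "y < V" "w < V" using x m tt unfolding u_def y_def w_def by auto
    have d: "u \<noteq> x" "y \<noteq> x" "y \<noteq> u" "w \<noteq> u" "w \<noteq> x" "w \<noteq> y"
      using x m tt uV unfolding u_def y_def w_def by metis+
    define t' where "t' = t(x := u, u := x, y := w, w := y)"
    have tu: "t u = w" "t y = x" "t w = u" "t x = y" unfolding w_def y_def using tt by auto
    have pt': "perfect_matching V t'"
      unfolding perfect_matching_def
    proof (intro conjI allI impI)
      fix z assume z: "z < V"
      show "t' z < V" using z uV x tt unfolding t'_def by auto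
      show "t' z \<noteq> z" using z d tt unfolding t'_def by auto
      show "t' (t' z) = z"
      proof -
        have "t z \<noteq> x" if "z \<noteq> y" using that tu tt by metis
        moreover have "t z \<noteq> u" if "z \<noteq> w" using that tu tt by metis
        moreover have "t z \<noteq> y" if "z \<noteq> x" using that tu tt by metis
        moreover have "t z \<noteq> w" if "z \<noteq> u" using that tu tt by metis
        ultimately show ?thesis using d tt unfolding t'_def by auto
      qed
    next
      fix z assume z: "V \<le> z"
      then show "t' z = z" using uV x tt unfolding t'_def by auto
    qed
    have sub: "{z. z < V \<and> t' z \<noteq> m z} \<subseteq> {z. z < V \<and> t z \<noteq> m z} - {x}"
    proof
      fix z assume z: "z \<in> {z. z < V \<and> t' z \<noteq> m z}"
      have mu: "m u = x" unfolding u_def using m by auto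
      have "z \<noteq> x" "z \<noteq> u" using z mu d u_def unfolding t'_def by auto
      moreover have "t y \<noteq> m y" using tu d m u_def by metis
      moreover have "t w \<noteq> m w" using tu d m mu by metis
      ultimately show "z \<in> {z. z < V \<and> t z \<noteq> m z} - {x}"
        using z unfolding t'_def by (auto split: if_splits)
    qed
    have "card {z. z < V \<and> t' z \<noteq> m z} < card {x. x < V \<and> t x \<noteq> m x}"
    proof -
      have fin: "finite {x. x < V \<and> t x \<noteq> m x}" by auto
      have "card ({x. x < V \<and> t x \<noteq> m x} - {x}) < card {x. x < V \<and> t x \<noteq> m x}"
        by (rule card_Diff1_less[OF fin]) (use x in auto)
      then show ?thesis using card_mono[OF _ sub] fin by (meson finite_Diff le_less_trans)
    qed
    then obtain Y' where Y': "col V m Y'" "col V t' Y'" using less.hyps pt' by blast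
    define Y where "Y = (if (x \<in> Y') \<noteq> (y \<in> Y') then Y' else (Y' - {x, u}) \<union> ({x, u} - Y'))"
    have memY: "z \<in> Y \<longleftrightarrow> (if z = x \<or> z = u then (if (x \<in> Y') \<noteq> (y \<in> Y') then z \<in> Y' else z \<notin> Y') else z \<in> Y')" for z
      unfolding Y_def by auto
    have mu: "m u = x" unfolding u_def using m by auto
    have cmY: "col V m Y"
      unfolding col_def
    proof (intro conjI allI impI)
      show "Y \<subseteq> {0..<V}" using colD2[OF Y'(1)] x uV unfolding Y_def by auto
      fix z assume z: "z < V"
      have e: "(z = x \<or> z = u) = (m z = x \<or> m z = u)" using mu u_def m by metis
      show "(z \<in> Y) = (m z \<notin> Y)" using colD[OF Y'(1) z] e memY by metis
    qed
    have xy: "(x \<in> Y) = (y \<notin> Y)" using memY d by auto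
    have ct: "col V t Y"
      unfolding col_def
    proof (intro conjI allI impI)
      show "Y \<subseteq> {0..<V}" using cmY unfolding col_def by auto
      fix z assume z: "z < V"
      consider "z = x" | "z = y" | "z = u" | "z = w" | "z \<noteq> x \<and> z \<noteq> y \<and> z \<noteq> u \<and> z \<noteq> w" by blast
      then show "(z \<in> Y) = (t z \<notin> Y)"
      proof cases
        case 1 then show ?thesis using xy tu by simp
      next
        case 2 then show ?thesis using xy tu by simp
      next
        case 3
        have "(u \<in> Y) = (x \<notin> Y)" using colD[OF cmY x(1)] u_def by simp
        moreover have "(y \<in> Y') = (w \<notin> Y')" using colD[OF Y'(2) uV(2)] unfolding t'_def using d by auto
        moreover have "(y \<in> Y) = (y \<in> Y')" "(w \<in> Y) = (w \<in> Y')" using memY d by auto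
        ultimately show ?thesis using 3 xy tu by simp
      next
        case 4
        have "(u \<in> Y) = (x \<notin> Y)" using colD[OF cmY x(1)] u_def by simp
        moreover have "(y \<in> Y') = (w \<notin> Y')" using colD[OF Y'(2) uV(2)] unfolding t'_def using d by auto
        moreover have "(y \<in> Y) = (y \<in> Y')" "(w \<in> Y) = (w \<in> Y')" using memY d by auto
        ultimately show ?thesis using 4 xy tu by simp
      next
        case 5
        have "t' z = t z" using 5 unfolding t'_def by auto
        moreover have "t z \<noteq> x \<and> t z \<noteq> u" using 5 tu tt by metis
        ultimately show ?thesis using colD[OF Y'(2) z] memY 5 by metis
      qed
    qed
    show ?thesis using cmY ct by blast
  qed
qed


lemma R2_iff: "(a, b) \<in> R2 V m t \<longleftrightarrow> a < V \<and> (b = m a \<or> b = t a)"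
  unfolding R2_def by auto

lemma R2_sym: assumes "perfect_matching V m" "perfect_matching V t" "(a, b) \<in> R2 V m t"
  shows "(b, a) \<in> R2 V m t"
proof -
  note m = pmD[OF assms(1)] and tt = pmD[OF assms(2)]
  show ?thesis using assms(3) m(1)[of a] m(3)[of a] tt(1)[of a] tt(3)[of a] unfolding R2_iff by auto
qed

lemma R2_sub: assumes "perfect_matching V m" "perfect_matching V t" "(a, b) \<in> R2 V m t"
  shows "a < V \<and> b < V"
proof -
  note m = pmD[OF assms(1)] and tt = pmD[OF assms(2)]
  show ?thesis using assms(3) m(1)[of a] tt(1)[of a] unfolding R2_iff by auto
qed

lemma R2_rt_sym: assumes "perfect_matching V m" "perfect_matching V t" "(a, b) \<in> (R2 V m t)\<^sup>*"
  shows "(b, a) \<in> (R2 V m t)\<^sup>*"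
  using assms(3)
proof induction
  case base then show ?case by simp
next
  case (step y z)
  then show ?case using R2_sym[OF assms(1,2) step(2)] by (meson converse_rtrancl_into_rtrancl)
qed

lemma R2_rt_lt: assumes "perfect_matching V m" "perfect_matching V t" "(a, b) \<in> (R2 V m t)\<^sup>*" "a < V"
  shows "b < V"
  using assms(3,4) by induction (use R2_sub[OF assms(1,2)] in blast)+

lemma closed_rt: assumes "\<And>a b. (a, b) \<in> R \<Longrightarrow> (a \<in> D) = (b \<in> D)" "(a, b) \<in> R\<^sup>*"
  shows "(a \<in> D) = (b \<in> D)"
  using assms(2) by induction (use assms(1) in blast)+

lemma card_col2:
  assumes pm: "perfect_matching V m" and pt: "perfect_matching V t"
  shows "card {Y. col V m Y \<and> col V t Y} = 2 ^ card ({0..<V} // (R2 V m t)\<^sup>*)"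
proof -
  define R where "R = R2 V m t"
  define Q where "Q = {0..<V} // R\<^sup>*"
  obtain Y0 where Y0: "col V m Y0" "col V t Y0" using col_exists[OF pm pt] by blast
  define g where "g K = {x. x < V \<and> (x \<in> Y0) \<noteq> (x \<in> \<Union>K)}" for K
  have finQ: "finite Q" unfolding Q_def quotient_def by auto
  have Qcl: "(a, b) \<in> R \<Longrightarrow> K \<in> Q \<Longrightarrow> (a \<in> K) = (b \<in> K)" for a b K
  proof -
    assume ab: "(a, b) \<in> R" and K: "K \<in> Q"
    then obtain z where z: "K = R\<^sup>* `` {z}" unfolding Q_def by (auto elim: quotientE)
    have ba: "(b, a) \<in> R" using R2_sym[OF pm pt] ab unfolding R_def by blast
    show "(a \<in> K) = (b \<in> K)" using ab ba z by (auto intro: rtrancl_into_rtrancl)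
  qed
  have QV: "K \<in> Q \<Longrightarrow> K \<subseteq> {0..<V}" for K
    unfolding Q_def R_def by (auto elim!: quotientE dest: R2_rt_lt[OF pm pt])
  have UnR: "(a, b) \<in> R \<Longrightarrow> K \<subseteq> Q \<Longrightarrow> (a \<in> \<Union>K) = (b \<in> \<Union>K)" for a b K
    using Qcl by blast
  have bij: "bij_betw g (Pow Q) {Y. col V m Y \<and> col V t Y}"
    unfolding bij_betw_def
  proof (intro conjI)
    show "inj_on g (Pow Q)"
    proof (rule inj_onI)
      fix K1 K2 assume K1: "K1 \<in> Pow Q" and K2: "K2 \<in> Pow Q" and eq: "g K1 = g K2"
      have U: "\<Union>K1 = \<Union>K2"
      proof -
        have "\<Union>K1 \<subseteq> {0..<V}" "\<Union>K2 \<subseteq> {0..<V}" using K1 K2 QV by auto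
        moreover have "x < V \<Longrightarrow> (x \<in> \<Union>K1) = (x \<in> \<Union>K2)" for x
          using eq unfolding g_def by (auto simp: set_eq_iff)
        ultimately show ?thesis by (smt (verit) UnionE UnionI atLeastLessThan_iff subsetD subset_antisym subsetI)
      qed
      have sub: "K1' \<subseteq> K2'" if "K1' \<in> Pow Q" "K2' \<in> Pow Q" "\<Union>K1' = \<Union>K2'" for K1' K2'
      proof
        fix K assume K: "K \<in> K1'"
        then have KQ: "K \<in> Q" using that by auto
        then obtain z where z: "K = R\<^sup>* `` {z}" "z < V" unfolding Q_def by (auto elim: quotientE)
        then have "z \<in> \<Union>K2'" using K that(3) by auto
        then obtain K' where K': "K' \<in> K2'" "z \<in> K'" by auto
        then have K'Q: "K' \<in> Q" using that by auto
        then obtain z' where z': "K' = R\<^sup>* `` {z'}" unfolding Q_def by (auto elim: quotientE)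
        have "(z', z) \<in> R\<^sup>*" using K' z' by auto
        then have "(z, z') \<in> R\<^sup>*" using R2_rt_sym[OF pm pt] unfolding R_def by blast
        have "K = K'"
          using \<open>(z', z) \<in> R\<^sup>*\<close> \<open>(z, z') \<in> R\<^sup>*\<close> z z' by (auto intro: rtrancl_trans)
        then show "K \<in> K2'" using K' by simp
      qed
      show "K1 = K2" using sub[OF K1 K2 U] sub[OF K2 K1 U[symmetric]] by auto
    qed
  next
    show "g ` Pow Q = {Y. col V m Y \<and> col V t Y}"
    proof
      show "g ` Pow Q \<subseteq> {Y. col V m Y \<and> col V t Y}"
      proof
        fix Y assume "Y \<in> g ` Pow Q"
        then obtain K where K: "K \<subseteq> Q" "Y = g K" by auto
        have rm: "(x, m x) \<in> R" "(x, t x) \<in> R" if "x < V" for x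
          using that unfolding R_def R2_iff by auto
        have gm: "z < V \<Longrightarrow> (z \<in> Y) = ((z \<in> Y0) \<noteq> (z \<in> \<Union>K))" for z
          unfolding K(2) g_def by blast
        have gsub: "Y \<subseteq> {0..<V}" unfolding K(2) g_def by auto
        have "col V m Y"
          unfolding col_def
        proof (intro conjI allI impI gsub)
          fix x assume x: "x < V"
          have "m x < V" using pmD(1)[OF pm x] .
          then show "(x \<in> Y) = (m x \<notin> Y)"
            using gm[OF x] gm[of "m x"] colD[OF Y0(1) x] UnR[OF rm(1)[OF x] K(1)] by blast
        qed
        moreover have "col V t Y"
          unfolding col_def
        proof (intro conjI allI impI gsub)
          fix x assume x: "x < V"
          have "t x < V" using pmD(1)[OF pt x] .
          then show "(x \<in> Y) = (t x \<notin> Y)"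
            using gm[OF x] gm[of "t x"] colD[OF Y0(2) x] UnR[OF rm(2)[OF x] K(1)] by blast
        qed
        ultimately show "Y \<in> {Y. col V m Y \<and> col V t Y}" by auto
      qed
    next
      show "{Y. col V m Y \<and> col V t Y} \<subseteq> g ` Pow Q"
      proof
        fix Y assume Y: "Y \<in> {Y. col V m Y \<and> col V t Y}"
        define D where "D = {x. x < V \<and> (x \<in> Y0) \<noteq> (x \<in> Y)}"
        define K where "K = {C \<in> Q. C \<subseteq> D}"
        have Dcl: "(a, b) \<in> R \<Longrightarrow> (a \<in> D) = (b \<in> D)" for a b
        proof -
          assume ab: "(a, b) \<in> R"
          then have ab': "a < V" "b < V" using R2_sub[OF pm pt] unfolding R_def by auto
          have DD: "z < V \<Longrightarrow> (z \<in> D) = ((z \<in> Y0) \<noteq> (z \<in> Y))" for z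
            unfolding D_def by blast
          have cY: "col V m Y" "col V t Y" using Y by auto
          from ab consider "b = m a" | "b = t a" unfolding R_def R2_iff by auto
          then show "(a \<in> D) = (b \<in> D)"
          proof cases
            case 1 then show ?thesis using colD[OF Y0(1) ab'(1)] colD[OF cY(1) ab'(1)] DD[OF ab'(1)] DD[OF ab'(2)] by blast
          next
            case 2 then show ?thesis using colD[OF Y0(2) ab'(1)] colD[OF cY(2) ab'(1)] DD[OF ab'(1)] DD[OF ab'(2)] by blast
          qed
        qed
        have UK: "\<Union>K = D"
        proof
          show "\<Union>K \<subseteq> D" unfolding K_def by auto
          show "D \<subseteq> \<Union>K"
          proof
            fix x assume x: "x \<in> D"
            have xV: "x < V" using x unfolding D_def by auto
            have "R\<^sup>* `` {x} \<subseteq> D" using closed_rt[of R D] Dcl x by blast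
            moreover have "R\<^sup>* `` {x} \<in> Q" unfolding Q_def using xV by (auto intro: quotientI)
            ultimately show "x \<in> \<Union>K" unfolding K_def by auto
          qed
        qed
        have "g K = Y"
        proof -
          have "Y \<subseteq> {0..<V}" using colD2[of V m Y] Y by blast
          then show ?thesis unfolding g_def UK D_def by auto
        qed
        moreover have "K \<in> Pow Q" unfolding K_def by auto
        ultimately show "Y \<in> g ` Pow Q" by blast
      qed
    qed
  qed
  have "card {Y. col V m Y \<and> col V t Y} = card (Pow Q)" using bij_betw_same_card[OF bij] by simp
  also have "\<dots> = 2 ^ card Q" using card_Pow finQ by blast
  finally show ?thesis unfolding Q_def R_def .
qed


lemma Bm_img: assumes pm: "perfect_matching V m"
  shows "m ` Bm V m = {x. x < V \<and> m x < x}"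
proof
  note p = pmD[OF pm]
  show "m ` Bm V m \<subseteq> {x. x < V \<and> m x < x}"
  proof
    fix y assume "y \<in> m ` Bm V m"
    then obtain b where b: "b < V" "b < m b" "y = m b" unfolding Bm_def by auto
    have "m y = b" using b(3) p(3) by simp
    then show "y \<in> {x. x < V \<and> m x < x}" using b p(1)[OF b(1)] by simp
  qed
  show "{x. x < V \<and> m x < x} \<subseteq> m ` Bm V m"
  proof
    fix x assume x: "x \<in> {x. x < V \<and> m x < x}"
    have "m x \<in> Bm V m" using x p(1)[of x] p(3)[of x] unfolding Bm_def by simp
    moreover have "x = m (m x)" using p(3) by simp
    ultimately show "x \<in> m ` Bm V m" by blast
  qed
qed

lemma card_Bm: assumes pm: "perfect_matching V m"
  shows "2 * card (Bm V m) = V"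
proof -
  note p = pmD[OF pm]
  have U: "{0..<V} = Bm V m \<union> m ` Bm V m"
  proof
    show "{0..<V} \<subseteq> Bm V m \<union> m ` Bm V m"
    proof
      fix x assume x: "x \<in> {0..<V}"
      then have "x < V" by simp
      then have "m x \<noteq> x" using p(2) by blast
      then have "x < m x \<or> m x < x" by arith
      then show "x \<in> Bm V m \<union> m ` Bm V m" using Bm_img[OF pm] \<open>x < V\<close> unfolding Bm_def by blast
    qed
    show "Bm V m \<union> m ` Bm V m \<subseteq> {0..<V}" using Bm_img[OF pm] unfolding Bm_def by auto
  qed
  have D: "Bm V m \<inter> m ` Bm V m = {}" using Bm_img[OF pm] unfolding Bm_def by auto
  have inj: "inj_on m (Bm V m)" by (rule inj_onI) (rule pm_inj[OF pm])
  have fin: "finite (Bm V m)" unfolding Bm_def by auto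
  have "V = card (Bm V m \<union> m ` Bm V m)" using U by (metis card_atLeastLessThan diff_zero)
  also have "\<dots> = card (Bm V m) + card (m ` Bm V m)" using D fin by (simp add: card_Un_disjoint)
  also have "\<dots> = 2 * card (Bm V m)" using card_image[OF inj] by simp
  finally show ?thesis by simp
qed

lemma card_col1: assumes pm: "perfect_matching V m"
  shows "card {Y. col V m Y} = 2 ^ card (Bm V m)"
proof -
  note p = pmD[OF pm]
  define B where "B = Bm V m"
  have Bimg: "m ` B = {x. x < V \<and> m x < x}" using Bm_img[OF pm] unfolding B_def .
  have BV: "B \<subseteq> {0..<V}" unfolding B_def Bm_def by auto
  have notB: "x < V \<Longrightarrow> x \<notin> B \<Longrightarrow> m x \<in> B" for x
  proof -
    assume x: "x < V" "x \<notin> B"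
    then have "m x \<noteq> x" using p(2) by blast
    then have "m x < x" using x unfolding B_def Bm_def by auto
    then show "m x \<in> B" using p(1)[OF x(1)] p(3)[of x] unfolding B_def Bm_def by simp
  qed
  have inB: "x \<in> B \<Longrightarrow> m x \<notin> B" for x
  proof
    assume "x \<in> B" "m x \<in> B"
    then have "x < m x" "m x < m (m x)" unfolding B_def Bm_def by simp_all
    then show False using p(3)[of x] by simp
  qed
  have bij: "bij_betw (\<lambda>Y. Y \<inter> B) {Y. col V m Y} (Pow B)"
    unfolding bij_betw_def
  proof (intro conjI)
    show "inj_on (\<lambda>Y. Y \<inter> B) {Y. col V m Y}"
    proof (rule inj_onI)
      fix Y1 Y2 assume Y1: "Y1 \<in> {Y. col V m Y}" and Y2: "Y2 \<in> {Y. col V m Y}" and eq: "Y1 \<inter> B = Y2 \<inter> B"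
      have c: "col V m Y1" "col V m Y2" using Y1 Y2 by auto
      show "Y1 = Y2"
      proof (rule set_eqI)
        fix x show "(x \<in> Y1) = (x \<in> Y2)"
        proof (cases "x < V")
          case False then show ?thesis using colD2[OF c(1)] colD2[OF c(2)] by auto
        next
          case True
          show ?thesis
          proof (cases "x \<in> B")
            case True then show ?thesis using eq by blast
          next
            case False
            have "m x \<in> B" using notB[OF \<open>x < V\<close> False] .
            then have "(m x \<in> Y1) = (m x \<in> Y2)" using eq by blast
            then show ?thesis using colD[OF c(1) \<open>x < V\<close>] colD[OF c(2) \<open>x < V\<close>] by blast
          qed
        qed
      qed
    qed
  next
    show "(\<lambda>Y. Y \<inter> B) ` {Y. col V m Y} = Pow B"
    proof
      show "(\<lambda>Y. Y \<inter> B) ` {Y. col V m Y} \<subseteq> Pow B" by auto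
      show "Pow B \<subseteq> (\<lambda>Y. Y \<inter> B) ` {Y. col V m Y}"
      proof
        fix S assume S: "S \<in> Pow B"
        define Y where "Y = S \<union> m ` (B - S)"
        have img: "(z \<in> m ` A) = (m z \<in> A)" for z A
        proof
          assume "z \<in> m ` A"
          then obtain a where "a \<in> A" "z = m a" by blast
          then show "m z \<in> A" using p(3)[of a] by simp
        next
          assume "m z \<in> A"
          moreover have "z = m (m z)" using p(3)[of z] by simp
          ultimately show "z \<in> m ` A" by blast
        qed
        have SB: "S \<subseteq> B" using S by blast
        have YB: "Y \<inter> B = S"
        proof -
          have "m ` (B - S) \<inter> B = {}" using img inB by blast
          then show ?thesis using SB unfolding Y_def by blast
        qed
        have "col V m Y"
          unfolding col_def
        proof (intro conjI allI impI)
          have "m ` (B - S) \<subseteq> {0..<V}"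
          proof
            fix y assume "y \<in> m ` (B - S)"
            then obtain b where "b \<in> B" "y = m b" by blast
            then show "y \<in> {0..<V}" using BV p(1)[of b] by auto
          qed
          then show "Y \<subseteq> {0..<V}" using SB BV unfolding Y_def by blast
          fix x assume x: "x < V"
          show "(x \<in> Y) = (m x \<notin> Y)"
          proof (cases "x \<in> B")
            case True
            then have "m x \<notin> B" using inB by blast
            have "(m x \<in> m ` (B - S)) = (x \<in> B - S)" using img[of "m x"] p(3)[of x] by simp
            moreover have "x \<notin> m ` (B - S)" using True inB img by blast
            ultimately show ?thesis using True \<open>m x \<notin> B\<close> SB unfolding Y_def by blast
          next
            case False
            then have mx: "m x \<in> B" using notB x by blast
            have "(x \<in> m ` (B - S)) = (m x \<in> B - S)" using img by blast
            moreover have "m x \<notin> m ` (B - S)" using img[of "m x" "B - S"] p(3)[of x] False by simp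
            ultimately show ?thesis using False mx SB unfolding Y_def by blast
          qed
        qed
        then show "S \<in> (\<lambda>Y. Y \<inter> B) ` {Y. col V m Y}" using YB by blast
      qed
    qed
  qed
  have "finite B" using BV finite_subset by blast
  then show ?thesis using bij_betw_same_card[OF bij] card_Pow unfolding B_def by metis
qed


lemma flip_sym: "flip V m X Y = flip V m Y X"
  unfolding flip_def by (auto simp: fun_eq_iff)

definition fl :: "nat \<Rightarrow> (nat \<Rightarrow> nat \<Rightarrow> nat) \<Rightarrow> nat set \<Rightarrow> nat \<Rightarrow> nat" where
  "fl V \<sigma> Z = flip V (\<sigma> 0) Z (Bm V (\<sigma> 0))"

definition act :: "nat \<Rightarrow> nat \<Rightarrow> (nat \<Rightarrow> nat set) \<Rightarrow> (nat \<Rightarrow> nat \<Rightarrow> nat) \<Rightarrow> (nat \<Rightarrow> nat \<Rightarrow> nat)" where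
  "act q V X \<sigma> = (\<lambda>c. if 1 \<le> c \<and> c \<le> q then fl V \<sigma> (X c) \<circ> \<sigma> c \<circ> fl V \<sigma> (X c) else \<sigma> c)"

definition good :: "nat \<Rightarrow> nat \<Rightarrow> (nat \<Rightarrow> nat set) \<Rightarrow> (nat \<Rightarrow> nat \<Rightarrow> nat) \<Rightarrow> bool" where
  "good q V X \<sigma> \<longleftrightarrow> (\<forall>c. 1 \<le> c \<and> c \<le> q \<longrightarrow> col V (\<sigma> 0) (X c))"

lemma act0: "act q V X \<sigma> 0 = \<sigma> 0"
  unfolding act_def by simp

lemma fl_act: "fl V (act q V X \<sigma>) = fl V \<sigma>"
  unfolding fl_def act0 ..

lemma good_act: "good q V X (act q V X \<sigma>) = good q V X \<sigma>"
  unfolding good_def act0 ..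

lemma cgD: assumes "colored_graph q V \<sigma>"
  shows "0 < V" "\<And>c. c \<le> q \<Longrightarrow> perfect_matching V (\<sigma> c)" "\<And>c. q < c \<Longrightarrow> \<sigma> c = id"
    "cg_connected q V \<sigma>"
  using assms unfolding colored_graph_def by auto

definition pmall :: "nat \<Rightarrow> nat \<Rightarrow> (nat \<Rightarrow> nat \<Rightarrow> nat) \<Rightarrow> bool" where
  "pmall q V \<sigma> \<longleftrightarrow> (\<forall>c\<le>q. perfect_matching V (\<sigma> c))"

lemma cg_pmall: "colored_graph q V \<sigma> \<Longrightarrow> pmall q V \<sigma>"
  unfolding pmall_def using cgD(2) by blast

context
  fixes q V X \<sigma>
  assumes pa: "pmall q V \<sigma>" and gd: "good q V X \<sigma>"
begin

lemma pmc: "c \<le> q \<Longrightarrow> perfect_matching V (\<sigma> c)" using pa unfolding pmall_def by blast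

lemma pm0: "perfect_matching V (\<sigma> 0)" using pmc[of 0] by simp

lemma colX: "1 \<le> c \<Longrightarrow> c \<le> q \<Longrightarrow> col V (\<sigma> 0) (X c)" using gd unfolding good_def by auto

lemma colB: "col V (\<sigma> 0) (Bm V (\<sigma> 0))" using col_Bm[OF pm0] .

lemma act_act: "act q V X (act q V X \<sigma>) = \<sigma>"
proof (rule ext)
  fix c
  show "act q V X (act q V X \<sigma>) c = \<sigma> c"
  proof (cases "1 \<le> c \<and> c \<le> q")
    case True
    have "fl V \<sigma> (X c) \<circ> (fl V \<sigma> (X c) \<circ> \<sigma> c \<circ> fl V \<sigma> (X c)) \<circ> fl V \<sigma> (X c) = \<sigma> c"
      unfolding fl_def by (rule flip_conj_conj[OF pm0 colX colB]) (use True in auto)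
    moreover have "act q V X (act q V X \<sigma>) c = fl V (act q V X \<sigma>) (X c) \<circ> act q V X \<sigma> c \<circ> fl V (act q V X \<sigma>) (X c)"
      unfolding act_def[of q V X "act q V X \<sigma>"] using True by simp
    moreover have "act q V X \<sigma> c = fl V \<sigma> (X c) \<circ> \<sigma> c \<circ> fl V \<sigma> (X c)"
      unfolding act_def using True by simp
    ultimately show ?thesis unfolding fl_act by simp
  next
    case False
    have "act q V X (act q V X \<sigma>) c = act q V X \<sigma> c"
      unfolding act_def[of q V X "act q V X \<sigma>"] using False by auto
    also have "\<dots> = \<sigma> c" unfolding act_def using False by auto
    finally show ?thesis .
  qed
qed

lemma act_pm: "c \<le> q \<Longrightarrow> perfect_matching V (act q V X \<sigma> c)"
proof -
  assume c: "c \<le> q"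
  show ?thesis
  proof (cases "1 \<le> c")
    case True
    then show ?thesis unfolding act_def fl_def using c
      by (simp add: conj_pm[OF pm0 colX colB pmc[OF c]])
  next
    case False
    then show ?thesis unfolding act_def using pmc[OF c] by simp
  qed
qed

lemma act_pmall: "pmall q V (act q V X \<sigma>)"
  unfolding pmall_def using act_pm by blast

lemma act_colB: "1 \<le> c \<Longrightarrow> c \<le> q \<Longrightarrow> col V (\<sigma> c) (X c) \<Longrightarrow> col V (act q V X \<sigma> c) (Bm V (\<sigma> 0))"
  unfolding act_def fl_def using conj_col[OF pm0 colX colB pmc] by simp

lemma act_colX: "1 \<le> c \<Longrightarrow> c \<le> q \<Longrightarrow> col V (\<sigma> c) (Bm V (\<sigma> 0)) \<Longrightarrow> col V (act q V X \<sigma> c) (X c)"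
  unfolding act_def fl_def flip_sym[of V "\<sigma> 0" "X c"]
  using conj_col[OF pm0 colB colX pmc] by simp

lemma act_R2: "1 \<le> i \<Longrightarrow> i \<le> q \<Longrightarrow> (R2 V (act q V X \<sigma> 0) (act q V X \<sigma> i))\<^sup>* = (R2 V (\<sigma> 0) (\<sigma> i))\<^sup>*"
  unfolding act0 unfolding act_def fl_def using R2_conj[OF pm0 colX colB pmc] by simp

lemma act_bc: "1 \<le> i \<Longrightarrow> i \<le> q \<Longrightarrow> bicoloured_cycles V (act q V X \<sigma>) i = bicoloured_cycles V \<sigma> i"
  unfolding bc_R2 using act_R2 by simp

lemma act_F0: "F0 q V (act q V X \<sigma>) = F0 q V \<sigma>"
  unfolding F0_def using act_bc by (intro sum.cong) auto

lemma act_order: "cg_order q V (act q V X \<sigma>) = cg_order q V \<sigma>"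
  unfolding cg_order_def act_F0 ..

lemma fl_edge: "y < V \<Longrightarrow> (y, fl V \<sigma> Z y) \<in> (cg_edges q V \<sigma>)\<^sup>*"
proof -
  assume y: "y < V"
  have "fl V \<sigma> Z y = y \<or> fl V \<sigma> Z y = \<sigma> 0 y" unfolding fl_def flip_def by simp
  then consider "fl V \<sigma> Z y = y" | "fl V \<sigma> Z y = \<sigma> 0 y" by blast
  then show ?thesis
  proof cases
    case 1 then show ?thesis by simp
  next
    case 2
    have "(y, \<sigma> 0 y) \<in> cg_edges q V \<sigma>" unfolding cg_edges_def using y by blast
    then show ?thesis using 2 by simp
  qed
qed

lemma act_edges: "cg_edges q V (act q V X \<sigma>) \<subseteq> (cg_edges q V \<sigma>)\<^sup>*"
proof
  fix p assume "p \<in> cg_edges q V (act q V X \<sigma>)"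
  then obtain x c where xc: "p = (x, act q V X \<sigma> c x)" "x < V" "c \<le> q" unfolding cg_edges_def by blast
  show "p \<in> (cg_edges q V \<sigma>)\<^sup>*"
  proof (cases "1 \<le> c")
    case False
    then have "p = (x, \<sigma> c x)" using xc unfolding act_def by simp
    then show ?thesis using xc unfolding cg_edges_def by blast
  next
    case True
    define f where "f = fl V \<sigma> (X c)"
    have p: "p = (x, f (\<sigma> c (f x)))" using xc True unfolding act_def f_def by simp
    have fx: "f x < V" unfolding f_def fl_def using flip_lt[OF pm0 colX colB xc(2)] True xc(3) by simp
    have "(x, f x) \<in> (cg_edges q V \<sigma>)\<^sup>*" unfolding f_def by (rule fl_edge[OF xc(2)])
    moreover have "(f x, \<sigma> c (f x)) \<in> cg_edges q V \<sigma>" unfolding cg_edges_def using fx xc(3) by blast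
    moreover have "\<sigma> c (f x) < V" using pmD(1)[OF pmc[OF xc(3)] fx] .
    then have "(\<sigma> c (f x), f (\<sigma> c (f x))) \<in> (cg_edges q V \<sigma>)\<^sup>*" unfolding f_def by (rule fl_edge)
    ultimately show ?thesis using p by (meson rtrancl_into_rtrancl rtrancl_trans)
  qed
qed

end

lemma act_gt: assumes "colored_graph q V \<sigma>" "q < c" shows "act q V X \<sigma> c = id"
proof -
  have "act q V X \<sigma> c = \<sigma> c" unfolding act_def using assms(2) by simp
  moreover have "\<sigma> c = id" using cgD(3)[OF assms] .
  ultimately show ?thesis by simp
qed

lemma act_cg: assumes cg: "colored_graph q V \<sigma>" and gd: "good q V X \<sigma>"
  shows "colored_graph q V (act q V X \<sigma>)"
  unfolding colored_graph_def
proof (intro conjI allI impI)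
  show "0 < V" using cgD(1)[OF cg] .
  have pa: "pmall q V \<sigma>" using cg_pmall[OF cg] .
  show "\<And>c. c \<le> q \<Longrightarrow> perfect_matching V (act q V X \<sigma> c)" using act_pm[OF pa gd] .
  show "\<And>c. q < c \<Longrightarrow> act q V X \<sigma> c = id" using act_gt[OF cg] .
  show "cg_connected q V (act q V X \<sigma>)"
    unfolding cg_connected_def
  proof (intro allI impI)
    fix x y assume "x < V" "y < V"
    then have "(x, y) \<in> (cg_edges q V \<sigma>)\<^sup>*" using cgD(4)[OF cg] unfolding cg_connected_def by blast
    moreover have "cg_edges q V \<sigma> \<subseteq> (cg_edges q V (act q V X \<sigma>))\<^sup>*"
    proof -
      have "cg_edges q V (act q V X (act q V X \<sigma>)) \<subseteq> (cg_edges q V (act q V X \<sigma>))\<^sup>*"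
        by (rule act_edges[OF act_pmall[OF pa gd]]) (simp add: good_act gd)
      then show ?thesis using act_act[OF pa gd] by simp
    qed
    ultimately show "(x, y) \<in> (cg_edges q V (act q V X \<sigma>))\<^sup>*"
      by (meson rtrancl_subset_rtrancl subsetD)
  qed
qed


lemma bip_iff: assumes cg: "colored_graph q V \<sigma>"
  shows "cg_bipartite q V \<sigma> \<longleftrightarrow> (\<exists>Y. \<forall>c\<le>q. col V (\<sigma> c) Y)"
proof
  assume "cg_bipartite q V \<sigma>"
  then obtain black :: "nat \<Rightarrow> bool" where b: "\<forall>c\<le>q. \<forall>x<V. black (\<sigma> c x) \<noteq> black x"
    unfolding cg_bipartite_def by blast
  define Y where "Y = {x. x < V \<and> black x}"
  have "col V (\<sigma> c) Y" if c: "c \<le> q" for c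
    unfolding col_def
  proof (intro conjI allI impI)
    show "Y \<subseteq> {0..<V}" unfolding Y_def by auto
    fix x assume x: "x < V"
    have "\<sigma> c x < V" using pmD(1)[OF cgD(2)[OF cg c] x] .
    moreover have "black (\<sigma> c x) \<noteq> black x" using b c x by blast
    ultimately show "(x \<in> Y) = (\<sigma> c x \<notin> Y)" using x unfolding Y_def by simp
  qed
  then show "\<exists>Y. \<forall>c\<le>q. col V (\<sigma> c) Y" by blast
next
  assume "\<exists>Y. \<forall>c\<le>q. col V (\<sigma> c) Y"
  then obtain Y where Y: "\<forall>c\<le>q. col V (\<sigma> c) Y" by blast
  have "\<forall>c\<le>q. \<forall>x<V. (\<sigma> c x \<in> Y) \<noteq> (x \<in> Y)"
  proof (intro allI impI)
    fix c x assume c: "c \<le> q" and x: "x < V"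
    show "(\<sigma> c x \<in> Y) \<noteq> (x \<in> Y)" using colD[OF Y[rule_format, OF c] x] by blast
  qed
  then show "cg_bipartite q V \<sigma>" unfolding cg_bipartite_def
    by (intro exI[of _ "\<lambda>x. x \<in> Y"]) simp
qed

lemma two_cols: assumes cg: "colored_graph q V \<sigma>" and Y: "\<forall>c\<le>q. col V (\<sigma> c) Y"
  shows "card {Z. \<forall>c\<le>q. col V (\<sigma> c) Z} = 2"
proof -
  have V0: "0 < V" using cgD(1)[OF cg] .
  define Y' where "Y' = {0..<V} - Y"
  have YV: "Y \<subseteq> {0..<V}" using Y[rule_format, of 0] colD2 by blast
  have cY': "\<forall>c\<le>q. col V (\<sigma> c) Y'"
  proof (intro allI impI)
    fix c assume c: "c \<le> q"
    show "col V (\<sigma> c) Y'"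
      unfolding col_def
    proof (intro conjI allI impI)
      show "Y' \<subseteq> {0..<V}" unfolding Y'_def by auto
      fix x assume x: "x < V"
      have "\<sigma> c x < V" using pmD(1)[OF cgD(2)[OF cg c] x] .
      then show "(x \<in> Y') = (\<sigma> c x \<notin> Y')" using colD[OF Y[rule_format, OF c] x] x unfolding Y'_def by auto
    qed
  qed
  have ne: "Y \<noteq> Y'"
  proof
    assume "Y = Y'"
    then have "(0 \<in> Y) = (0 \<notin> Y)" using V0 unfolding Y'_def by auto
    then show False by blast
  qed
  have "{Z. \<forall>c\<le>q. col V (\<sigma> c) Z} = {Y, Y'}"
  proof
    show "{Y, Y'} \<subseteq> {Z. \<forall>c\<le>q. col V (\<sigma> c) Z}" using Y cY' by blast
    show "{Z. \<forall>c\<le>q. col V (\<sigma> c) Z} \<subseteq> {Y, Y'}"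
    proof
      fix Z assume "Z \<in> {Z. \<forall>c\<le>q. col V (\<sigma> c) Z}"
      then have Z: "\<forall>c\<le>q. col V (\<sigma> c) Z" by blast
      have ZV: "Z \<subseteq> {0..<V}" using Z[rule_format, of 0] colD2 by blast
      define D where "D = {x. (x \<in> Y) = (x \<in> Z)}"
      have Dcl: "(a, b) \<in> cg_edges q V \<sigma> \<Longrightarrow> (a \<in> D) = (b \<in> D)" for a b
      proof -
        assume "(a, b) \<in> cg_edges q V \<sigma>"
        then obtain c where c: "c \<le> q" "a < V" "b = \<sigma> c a" unfolding cg_edges_def by blast
        show "(a \<in> D) = (b \<in> D)" using colD[OF Y[rule_format, OF c(1)] c(2)] colD[OF Z[rule_format, OF c(1)] c(2)] c(3)
          unfolding D_def by blast
      qed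
      have all: "(0 \<in> D) = (x \<in> D)" if x: "x < V" for x
      proof -
        have "(0, x) \<in> (cg_edges q V \<sigma>)\<^sup>*" using cgD(4)[OF cg] V0 x unfolding cg_connected_def by blast
        then show ?thesis using closed_rt[of "cg_edges q V \<sigma>" D] Dcl by blast
      qed
      show "Z \<in> {Y, Y'}"
      proof (cases "0 \<in> D")
        case True
        have "Z = Y"
        proof (rule set_eqI)
          fix x show "(x \<in> Z) = (x \<in> Y)"
          proof (cases "x < V")
            case True
            then show ?thesis using all[OF True] \<open>0 \<in> D\<close> unfolding D_def by blast
          next
            case False
            then show ?thesis using YV ZV by auto
          qed
        qed
        then show ?thesis by blast
      next
        case False
        have "Z = Y'"
        proof (rule set_eqI)
          fix x show "(x \<in> Z) = (x \<in> Y')"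
          proof (cases "x < V")
            case True
            then show ?thesis using all[OF True] \<open>0 \<notin> D\<close> unfolding D_def Y'_def by auto
          next
            case False
            then show ?thesis using ZV unfolding Y'_def by auto
          qed
        qed
        then show ?thesis by blast
      qed
    qed
  qed
  then show ?thesis using ne by simp
qed


definition rst :: "nat \<Rightarrow> nat \<Rightarrow> (nat \<Rightarrow> nat \<Rightarrow> nat) \<Rightarrow> (nat \<Rightarrow> nat \<Rightarrow> nat)" where
  "rst q V \<sigma> = (\<lambda>c\<in>{..q}. \<lambda>x\<in>{..<V}. \<sigma> c x)"

lemma fin_cg: "finite {\<sigma>. colored_graph q V \<sigma>}"
proof (rule finite_imageD)
  have "rst q V ` {\<sigma>. colored_graph q V \<sigma>} \<subseteq> (\<Pi>\<^sub>E c\<in>{..q}. \<Pi>\<^sub>E x\<in>{..<V}. {..<V})"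
  proof
    fix f assume "f \<in> rst q V ` {\<sigma>. colored_graph q V \<sigma>}"
    then obtain \<sigma> where s: "colored_graph q V \<sigma>" "f = rst q V \<sigma>" by blast
    have "\<sigma> c x < V" if "c \<le> q" "x < V" for c x using pmD(1)[OF cgD(2)[OF s(1) that(1)] that(2)] .
    then show "f \<in> (\<Pi>\<^sub>E c\<in>{..q}. \<Pi>\<^sub>E x\<in>{..<V}. {..<V})" unfolding s(2) rst_def by auto
  qed
  moreover have "finite (\<Pi>\<^sub>E c\<in>{..q}. \<Pi>\<^sub>E x\<in>{..<V}. {..<V})" by (intro finite_PiE) auto
  ultimately show "finite (rst q V ` {\<sigma>. colored_graph q V \<sigma>})" using finite_subset by blast
  show "inj_on (rst q V) {\<sigma>. colored_graph q V \<sigma>}"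
  proof (rule inj_onI)
    fix \<sigma> \<tau> assume s: "\<sigma> \<in> {\<sigma>. colored_graph q V \<sigma>}" and t: "\<tau> \<in> {\<sigma>. colored_graph q V \<sigma>}"
      and eq: "rst q V \<sigma> = rst q V \<tau>"
    show "\<sigma> = \<tau>"
    proof (intro ext)
      fix c x show "\<sigma> c x = \<tau> c x"
      proof (cases "c \<le> q")
        case False
        then have "\<sigma> c = id" "\<tau> c = id" using cgD(3) s t by auto
        then show ?thesis by simp
      next
        case True
        show ?thesis
        proof (cases "x < V")
          case True
          have "rst q V \<sigma> c x = rst q V \<tau> c x" using eq by simp
          then show ?thesis unfolding rst_def using True \<open>c \<le> q\<close> by simp
        next
          case False
          then have "V \<le> x" by simp
          then show ?thesis using pmD(4)[OF cgD(2)[OF _ \<open>c \<le> q\<close>]] s t by (metis mem_Collect_eq)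
        qed
      qed
    qed
  qed
qed

lemma fin_LR: "finite (labelled_rooted q n \<delta> b)"
proof -
  have "labelled_rooted q n \<delta> b \<subseteq> {\<sigma>. colored_graph q (2*n) \<sigma>} \<times> {..<2*n}"
    unfolding labelled_rooted_def by auto
  then show ?thesis using fin_cg finite_subset by blast
qed

lemma LR_mem: "(\<sigma>, r) \<in> labelled_rooted q n \<delta> b \<longleftrightarrow>
   colored_graph q (2*n) \<sigma> \<and> r < 2*n \<and> cg_order q (2*n) \<sigma> = \<delta> \<and> (b \<longrightarrow> cg_bipartite q (2*n) \<sigma>)"
  unfolding labelled_rooted_def by simp

lemma LR_True: "labelled_rooted q n \<delta> True = {g \<in> labelled_rooted q n \<delta> False. cg_bipartite q (2*n) (fst g)}"
  unfolding labelled_rooted_def by auto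


definition Cm :: "nat \<Rightarrow> nat \<Rightarrow> ((nat \<Rightarrow> nat \<Rightarrow> nat) \<times> nat) \<Rightarrow> bool" where
  "Cm q V g \<longleftrightarrow> (\<forall>c\<le>q. col V (fst g c) (Bm V (fst g 0)))"

definition Phi :: "nat \<Rightarrow> nat \<Rightarrow> ((nat \<Rightarrow> nat \<Rightarrow> nat) \<times> nat) \<times> (nat \<Rightarrow> nat set) \<Rightarrow> ((nat \<Rightarrow> nat \<Rightarrow> nat) \<times> nat) \<times> (nat \<Rightarrow> nat set)" where
  "Phi q V p = ((act q V (snd p) (fst (fst p)), snd (fst p)), snd p)"

definition Psi :: "nat \<Rightarrow> nat \<Rightarrow> ((nat \<Rightarrow> nat \<Rightarrow> nat) \<times> nat) \<times> nat set \<Rightarrow> ((nat \<Rightarrow> nat \<Rightarrow> nat) \<times> nat) \<times> nat set" where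
  "Psi q V p = ((act q V (\<lambda>_. snd p) (fst (fst p)), snd (fst p)), snd p)"

lemma LR_act: assumes "(\<sigma>, r) \<in> labelled_rooted q n \<delta> False" "good q (2*n) X \<sigma>"
  shows "(act q (2*n) X \<sigma>, r) \<in> labelled_rooted q n \<delta> False"
proof -
  have cg: "colored_graph q (2*n) \<sigma>" using assms(1) unfolding LR_mem by blast
  show ?thesis using assms(1) act_cg[OF cg assms(2)] act_order[OF cg_pmall[OF cg] assms(2)]
    unfolding LR_mem by simp
qed

context
  fixes q n :: nat and \<delta> :: int
begin

abbreviation "LRF \<equiv> labelled_rooted q n \<delta> False"
abbreviation "CLR \<equiv> {g \<in> LRF. Cm q (2*n) g}"
abbreviation "SA \<equiv> SIGMA g:LRF. \<Pi>\<^sub>E i\<in>{1..q}. {Y. col (2*n) (fst g 0) Y \<and> col (2*n) (fst g i) Y}"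
abbreviation "SA' \<equiv> SIGMA g:CLR. \<Pi>\<^sub>E i\<in>{1..q}. {Y. col (2*n) (fst g 0) Y}"
abbreviation "SB \<equiv> SIGMA g:LRF. {Y. \<forall>c\<le>q. col (2*n) (fst g c) Y}"
abbreviation "SB' \<equiv> SIGMA g:CLR. {Y. col (2*n) (fst g 0) Y}"

lemma SA_bij: "bij_betw (Phi q (2*n)) SA SA'"
proof (rule bij_betw_byWitness[where f'="Phi q (2*n)"])
  have inv: "Phi q (2*n) (Phi q (2*n) ((\<sigma>, r), X)) = ((\<sigma>, r), X)"
    if "(\<sigma>, r) \<in> LRF" "good q (2*n) X \<sigma>" for \<sigma> r X
  proof -
    have cg: "colored_graph q (2*n) \<sigma>" using that(1) unfolding LR_mem by blast
    show ?thesis unfolding Phi_def using act_act[OF cg_pmall[OF cg] that(2)] by simp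
  qed
  have goodA: "good q (2*n) X \<sigma>" if "((\<sigma>, r), X) \<in> SA" for \<sigma> r X
    using that unfolding good_def by (auto simp: PiE_iff)
  have goodA': "good q (2*n) X \<sigma>" if "((\<sigma>, r), X) \<in> SA'" for \<sigma> r X
    using that unfolding good_def by (auto simp: PiE_iff)
  show "\<forall>a\<in>SA. Phi q (2*n) (Phi q (2*n) a) = a"
  proof
    fix a assume a: "a \<in> SA"
    obtain \<sigma> r X where "a = ((\<sigma>, r), X)" by (metis prod.collapse)
    then show "Phi q (2*n) (Phi q (2*n) a) = a" using inv goodA a by auto
  qed
  show "\<forall>a\<in>SA'. Phi q (2*n) (Phi q (2*n) a) = a"
  proof
    fix a assume a: "a \<in> SA'"
    obtain \<sigma> r X where "a = ((\<sigma>, r), X)" by (metis prod.collapse)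
    then show "Phi q (2*n) (Phi q (2*n) a) = a" using inv goodA' a by auto
  qed
  show "Phi q (2*n) ` SA \<subseteq> SA'"
  proof
    fix b assume "b \<in> Phi q (2*n) ` SA"
    then obtain a0 where a0: "a0 \<in> SA" and b0: "b = Phi q (2*n) a0" by blast
    obtain \<sigma> r X where e: "a0 = ((\<sigma>, r), X)" by (metis prod.collapse)
    have a: "((\<sigma>, r), X) \<in> SA" using a0 e by simp
    have b: "b = Phi q (2*n) ((\<sigma>, r), X)" using b0 e by simp
    have gd: "good q (2*n) X \<sigma>" using goodA[OF a] .
    have lr: "(\<sigma>, r) \<in> LRF" using SigmaD1[OF a] .
    have aX: "X \<in> (\<Pi>\<^sub>E i\<in>{1..q}. {Y. col (2*n) (\<sigma> 0) Y \<and> col (2*n) (\<sigma> i) Y})"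
      using SigmaD2[OF a] by simp
    have cg: "colored_graph q (2*n) \<sigma>" using lr unfolding LR_mem by blast
    have pa: "pmall q (2*n) \<sigma>" using cg_pmall[OF cg] .
    have Xc: "col (2*n) (\<sigma> i) (X i)" if "i \<in> {1..q}" for i using PiE_mem[OF aX that] by simp
    have "Cm q (2*n) (act q (2*n) X \<sigma>, r)"
      unfolding Cm_def fst_conv act0
    proof (intro allI impI)
      fix c assume c: "c \<le> q"
      show "col (2*n) (act q (2*n) X \<sigma> c) (Bm (2*n) (\<sigma> 0))"
      proof (cases "c = 0")
        case True then show ?thesis using colB[OF pa gd] act0 by simp
      next
        case False
        then have c1: "1 \<le> c" by simp
        then have "col (2*n) (\<sigma> c) (X c)" using Xc c by simp
        then show ?thesis using act_colB[OF pa gd c1 c] by simp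
      qed
    qed
    moreover have "(act q (2*n) X \<sigma>, r) \<in> LRF" using LR_act[OF lr gd] .
    moreover have "X \<in> (\<Pi>\<^sub>E i\<in>{1..q}. {Y. col (2*n) (\<sigma> 0) Y})"
      using aX PiE_mono[of "{1..q}" "\<lambda>i. {Y. col (2*n) (\<sigma> 0) Y \<and> col (2*n) (\<sigma> i) Y}" "\<lambda>i. {Y. col (2*n) (\<sigma> 0) Y}"]
      by blast
    ultimately show "b \<in> SA'" unfolding b Phi_def fst_conv snd_conv
      by (intro SigmaI) (simp_all add: act0)
  qed
  show "Phi q (2*n) ` SA' \<subseteq> SA"
  proof
    fix b assume "b \<in> Phi q (2*n) ` SA'"
    then obtain a0 where a0: "a0 \<in> SA'" and b0: "b = Phi q (2*n) a0" by blast
    obtain \<sigma> r X where e: "a0 = ((\<sigma>, r), X)" by (metis prod.collapse)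
    have a: "((\<sigma>, r), X) \<in> SA'" using a0 e by simp
    have b: "b = Phi q (2*n) ((\<sigma>, r), X)" using b0 e by simp
    have gd: "good q (2*n) X \<sigma>" using goodA'[OF a] .
    have lrc: "(\<sigma>, r) \<in> CLR" using SigmaD1[OF a] .
    have lr: "(\<sigma>, r) \<in> LRF" using lrc by simp
    have cm: "Cm q (2*n) (\<sigma>, r)" using lrc by simp
    have aX: "X \<in> (\<Pi>\<^sub>E i\<in>{1..q}. {Y. col (2*n) (\<sigma> 0) Y})"
      using SigmaD2[OF a] by simp
    have cg: "colored_graph q (2*n) \<sigma>" using lr unfolding LR_mem by blast
    have pa: "pmall q (2*n) \<sigma>" using cg_pmall[OF cg] .
    have "X \<in> (\<Pi>\<^sub>E i\<in>{1..q}. {Y. col (2*n) (act q (2*n) X \<sigma> 0) Y \<and> col (2*n) (act q (2*n) X \<sigma> i) Y})"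
      unfolding PiE_iff
    proof (intro conjI ballI)
      fix i assume i: "i \<in> {1..q}"
      have "col (2*n) (\<sigma> i) (Bm (2*n) (\<sigma> 0))" using cm i unfolding Cm_def by simp
      then have "col (2*n) (act q (2*n) X \<sigma> i) (X i)" using act_colX[OF pa gd] i by simp
      moreover have "col (2*n) (\<sigma> 0) (X i)" using PiE_mem[OF aX i] by simp
      ultimately show "X i \<in> {Y. col (2*n) (act q (2*n) X \<sigma> 0) Y \<and> col (2*n) (act q (2*n) X \<sigma> i) Y}"
        unfolding act0 by simp
    next
      show "X \<in> extensional {1..q}" using aX by (simp add: PiE_iff)
    qed
    moreover have "(act q (2*n) X \<sigma>, r) \<in> LRF" using LR_act[OF lr gd] .
    ultimately show "b \<in> SA" unfolding b Phi_def fst_conv snd_conv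
      by (intro SigmaI) simp_all
  qed
qed

lemma SB_bij: "bij_betw (Psi q (2*n)) SB SB'"
proof (rule bij_betw_byWitness[where f'="Psi q (2*n)"])
  have inv: "Psi q (2*n) (Psi q (2*n) ((\<sigma>, r), Y)) = ((\<sigma>, r), Y)"
    if "(\<sigma>, r) \<in> LRF" "col (2*n) (\<sigma> 0) Y" for \<sigma> r Y
  proof -
    have cg: "colored_graph q (2*n) \<sigma>" using that(1) unfolding LR_mem by blast
    have gd: "good q (2*n) (\<lambda>_. Y) \<sigma>" using that(2) unfolding good_def by simp
    show ?thesis unfolding Psi_def using act_act[OF cg_pmall[OF cg] gd] by simp
  qed
  show "\<forall>a\<in>SB. Psi q (2*n) (Psi q (2*n) a) = a"
  proof
    fix a assume a: "a \<in> SB"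
    obtain \<sigma> r Y where e: "a = ((\<sigma>, r), Y)" by (metis prod.collapse)
    then have "(\<sigma>, r) \<in> LRF" "col (2*n) (\<sigma> 0) Y" using a by simp_all
    then show "Psi q (2*n) (Psi q (2*n) a) = a" using inv e by simp
  qed
  show "\<forall>a\<in>SB'. Psi q (2*n) (Psi q (2*n) a) = a"
  proof
    fix a assume a: "a \<in> SB'"
    obtain \<sigma> r Y where e: "a = ((\<sigma>, r), Y)" by (metis prod.collapse)
    then have "(\<sigma>, r) \<in> LRF" "col (2*n) (\<sigma> 0) Y" using a by simp_all
    then show "Psi q (2*n) (Psi q (2*n) a) = a" using inv e by simp
  qed
  show "Psi q (2*n) ` SB \<subseteq> SB'"
  proof
    fix b assume "b \<in> Psi q (2*n) ` SB"
    then obtain a0 where a0: "a0 \<in> SB" and b0: "b = Psi q (2*n) a0" by blast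
    obtain \<sigma> r Y where e: "a0 = ((\<sigma>, r), Y)" by (metis prod.collapse)
    have a: "((\<sigma>, r), Y) \<in> SB" using a0 e by simp
    have b: "b = Psi q (2*n) ((\<sigma>, r), Y)" using b0 e by simp
    have lr: "(\<sigma>, r) \<in> LRF" using SigmaD1[OF a] .
    have Yc: "\<forall>c\<le>q. col (2*n) (\<sigma> c) Y" using SigmaD2[OF a] by simp
    have gd: "good q (2*n) (\<lambda>_. Y) \<sigma>" using Yc unfolding good_def by simp
    have cg: "colored_graph q (2*n) \<sigma>" using lr unfolding LR_mem by blast
    have pa: "pmall q (2*n) \<sigma>" using cg_pmall[OF cg] .
    have "Cm q (2*n) (act q (2*n) (\<lambda>_. Y) \<sigma>, r)"
      unfolding Cm_def fst_conv act0
    proof (intro allI impI)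
      fix c assume c: "c \<le> q"
      show "col (2*n) (act q (2*n) (\<lambda>_. Y) \<sigma> c) (Bm (2*n) (\<sigma> 0))"
      proof (cases "c = 0")
        case True then show ?thesis using colB[OF pa gd] act0 by simp
      next
        case False
        then have "1 \<le> c" by simp
        then show ?thesis using act_colB[OF pa gd _ c] Yc c by simp
      qed
    qed
    moreover have "(act q (2*n) (\<lambda>_. Y) \<sigma>, r) \<in> LRF" using LR_act[OF lr gd] .
    moreover have "col (2*n) (act q (2*n) (\<lambda>_. Y) \<sigma> 0) Y" using Yc unfolding act0 by simp
    ultimately show "b \<in> SB'" unfolding b Psi_def fst_conv snd_conv
      by (intro SigmaI) (simp_all add: act0)
  qed
  show "Psi q (2*n) ` SB' \<subseteq> SB"
  proof
    fix b assume "b \<in> Psi q (2*n) ` SB'"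
    then obtain a0 where a0: "a0 \<in> SB'" and b0: "b = Psi q (2*n) a0" by blast
    obtain \<sigma> r Y where e: "a0 = ((\<sigma>, r), Y)" by (metis prod.collapse)
    have a: "((\<sigma>, r), Y) \<in> SB'" using a0 e by simp
    have b: "b = Psi q (2*n) ((\<sigma>, r), Y)" using b0 e by simp
    have lrc: "(\<sigma>, r) \<in> CLR" using SigmaD1[OF a] .
    have lr: "(\<sigma>, r) \<in> LRF" using lrc by simp
    have cm: "Cm q (2*n) (\<sigma>, r)" using lrc by simp
    have Y0: "col (2*n) (\<sigma> 0) Y" using SigmaD2[OF a] by simp
    have gd: "good q (2*n) (\<lambda>_. Y) \<sigma>" using Y0 unfolding good_def by simp
    have cg: "colored_graph q (2*n) \<sigma>" using lr unfolding LR_mem by blast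
    have pa: "pmall q (2*n) \<sigma>" using cg_pmall[OF cg] .
    have "\<forall>c\<le>q. col (2*n) (act q (2*n) (\<lambda>_. Y) \<sigma> c) Y"
    proof (intro allI impI)
      fix c assume c: "c \<le> q"
      show "col (2*n) (act q (2*n) (\<lambda>_. Y) \<sigma> c) Y"
      proof (cases "c = 0")
        case True then show ?thesis using Y0 act0 by simp
      next
        case False
        then have "1 \<le> c" by simp
        moreover have "col (2*n) (\<sigma> c) (Bm (2*n) (\<sigma> 0))" using cm c unfolding Cm_def by simp
        ultimately show ?thesis using act_colX[OF pa gd _ c] by simp
      qed
    qed
    moreover have "(act q (2*n) (\<lambda>_. Y) \<sigma>, r) \<in> LRF" using LR_act[OF lr gd] .
    ultimately show "b \<in> SB" unfolding b Psi_def fst_conv snd_conv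
      by (intro SigmaI) simp_all
  qed
qed

end


lemma fin_col: "finite {Y. col V f Y}"
proof -
  have "{Y. col V f Y} \<subseteq> Pow {0..<V}" using colD2 by blast
  then show ?thesis using finite_subset by blast
qed

lemma fin_col': "finite {Y. P Y \<and> col V f Y}"
  using fin_col[of V f] by (rule finite_subset[rotated]) blast

lemma F0_rel: assumes q: "1 \<le> q" and ord: "cg_order q (2*n) \<sigma> = int d"
  shows "F0 q (2*n) \<sigma> + d = 1 + (q - 1) * n"
proof -
  define F where "F = F0 q (2*n) \<sigma>"
  have iq: "int q - 1 = int (q - 1)" using q by simp
  have e0: "(int q - 1) * int (2*n) = 2 * (int (q - 1) * int n)" unfolding iq by simp
  have e1: "((int q - 1) * int (2*n)) div 2 = int (q - 1) * int n" unfolding e0 by simp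
  have "1 + ((int q - 1) * int (2*n)) div 2 - int F = int d" using ord unfolding cg_order_def F_def .
  then have "1 + int (q - 1) * int n - int F = int d" unfolding e1 .
  then have "int F + int d = 1 + int (q - 1) * int n" by linarith
  then have "int (F + d) = int (1 + (q - 1) * n)" by simp
  then show ?thesis unfolding F_def by (rule of_nat_eq_iff[THEN iffD1])
qed

lemma labelled_main:
  assumes q: "1 \<le> q"
  shows "card (labelled_rooted q n (int d) False) = 2 ^ d * card (labelled_rooted q n (int d) True)"
proof -
  define \<delta> where "\<delta> = int d"
  let ?LRF = "LRF q n \<delta>"
  let ?CLR = "CLR q n \<delta>"
  have finL: "finite ?LRF" using fin_LR .
  have finC: "finite ?CLR" using finL by simp
  have cgL: "colored_graph q (2*n) (fst g)" if "g \<in> ?LRF" for g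
    using that unfolding labelled_rooted_def by auto
  have cardA: "card (SA q n \<delta>) = (\<Sum>g\<in>?LRF. 2 ^ F0 q (2*n) (fst g))"
  proof -
    have "card (SA q n \<delta>) = (\<Sum>g\<in>?LRF. card (\<Pi>\<^sub>E i\<in>{1..q}. {Y. col (2*n) (fst g 0) Y \<and> col (2*n) (fst g i) Y}))"
      using finL by (intro card_SigmaI) (auto intro!: finite_PiE fin_col')
    also have "\<dots> = (\<Sum>g\<in>?LRF. 2 ^ F0 q (2*n) (fst g))"
    proof (rule sum.cong[OF refl])
      fix g assume g: "g \<in> ?LRF"
      have cg: "colored_graph q (2*n) (fst g)" using cgL[OF g] .
      have "card (\<Pi>\<^sub>E i\<in>{1..q}. {Y. col (2*n) (fst g 0) Y \<and> col (2*n) (fst g i) Y})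
          = (\<Prod>i\<in>{1..q}. card {Y. col (2*n) (fst g 0) Y \<and> col (2*n) (fst g i) Y})"
        by (rule card_PiE) simp
      also have "\<dots> = (\<Prod>i\<in>{1..q}. 2 ^ bicoloured_cycles (2*n) (fst g) i)"
      proof (rule prod.cong[OF refl])
        fix i assume i: "i \<in> {1..q}"
        have "perfect_matching (2*n) (fst g 0)" "perfect_matching (2*n) (fst g i)"
          using cgD(2)[OF cg] i by auto
        then show "card {Y. col (2*n) (fst g 0) Y \<and> col (2*n) (fst g i) Y} = 2 ^ bicoloured_cycles (2*n) (fst g) i"
          unfolding bc_R2 by (rule card_col2)
      qed
      also have "\<dots> = 2 ^ F0 q (2*n) (fst g)" unfolding F0_def by (simp add: power_sum)
      finally show "card (\<Pi>\<^sub>E i\<in>{1..q}. {Y. col (2*n) (fst g 0) Y \<and> col (2*n) (fst g i) Y}) = 2 ^ F0 q (2*n) (fst g)" .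
    qed
    finally show ?thesis .
  qed
  have colcnt: "card {Y. col (2*n) (fst g 0) Y} = 2 ^ n" if "g \<in> ?LRF" for g
  proof -
    have pm: "perfect_matching (2*n) (fst g 0)" using cgD(2)[OF cgL[OF that]] by simp
    have "card (Bm (2*n) (fst g 0)) = n" using card_Bm[OF pm] by simp
    then show ?thesis using card_col1[OF pm] by simp
  qed
  have cardA': "card (SA' q n \<delta>) = card ?CLR * 2 ^ (n * q)"
  proof -
    have "card (SA' q n \<delta>) = (\<Sum>g\<in>?CLR. card (\<Pi>\<^sub>E i\<in>{1..q}. {Y. col (2*n) (fst g 0) Y}))"
      using finC by (intro card_SigmaI) (auto intro!: finite_PiE fin_col)
    also have "\<dots> = (\<Sum>g\<in>?CLR. 2 ^ (n * q))"
    proof (rule sum.cong[OF refl])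
      fix g assume g: "g \<in> ?CLR"
      have "card (\<Pi>\<^sub>E i\<in>{1..q}. {Y. col (2*n) (fst g 0) Y}) = (\<Prod>i\<in>{1..q}. card {Y. col (2*n) (fst g 0) Y})"
        by (rule card_PiE) simp
      also have "\<dots> = (2 ^ n) ^ q" using colcnt g by simp
      finally show "card (\<Pi>\<^sub>E i\<in>{1..q}. {Y. col (2*n) (fst g 0) Y}) = 2 ^ (n * q)" by (simp add: power_mult)
    qed
    finally show ?thesis by simp
  qed
  have cardB: "card (SB q n \<delta>) = 2 * card (labelled_rooted q n \<delta> True)"
  proof -
    have "card (SB q n \<delta>) = (\<Sum>g\<in>?LRF. card {Y. \<forall>c\<le>q. col (2*n) (fst g c) Y})"
    proof (intro card_SigmaI finL ballI)
      fix g show "finite {Y. \<forall>c\<le>q. col (2*n) (fst g c) Y}"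
        using fin_col[of "2*n" "fst g 0"] by (rule finite_subset[rotated]) blast
    qed
    also have "\<dots> = (\<Sum>g\<in>?LRF. if cg_bipartite q (2*n) (fst g) then 2 else 0)"
    proof (rule sum.cong[OF refl])
      fix g assume g: "g \<in> ?LRF"
      show "card {Y. \<forall>c\<le>q. col (2*n) (fst g c) Y} = (if cg_bipartite q (2*n) (fst g) then 2 else 0)"
      proof (cases "cg_bipartite q (2*n) (fst g)")
        case True
        then obtain Y where "\<forall>c\<le>q. col (2*n) (fst g c) Y" using bip_iff[OF cgL[OF g]] by blast
        then show ?thesis using two_cols[OF cgL[OF g]] True by simp
      next
        case False
        then have E: "{Y. \<forall>c\<le>q. col (2*n) (fst g c) Y} = {}" using bip_iff[OF cgL[OF g]] by blast
        show ?thesis unfolding E using False by simp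
      qed
    qed
    also have "\<dots> = (\<Sum>g\<in>{g \<in> ?LRF. cg_bipartite q (2*n) (fst g)}. 2)"
      using sum.inter_filter[OF finL, of "\<lambda>_. 2::nat"] by simp
    also have "\<dots> = 2 * card (labelled_rooted q n \<delta> True)" unfolding LR_True by simp
    finally show ?thesis .
  qed
  have cardB': "card (SB' q n \<delta>) = card ?CLR * 2 ^ n"
  proof -
    have "card (SB' q n \<delta>) = (\<Sum>g\<in>?CLR. card {Y. col (2*n) (fst g 0) Y})"
      using finC by (intro card_SigmaI) (auto intro!: fin_col)
    also have "\<dots> = (\<Sum>g\<in>?CLR. 2 ^ n)" using colcnt by (intro sum.cong) auto
    finally show ?thesis by simp
  qed
  have eA: "card (SA q n \<delta>) = card (SA' q n \<delta>)" using bij_betw_same_card[OF SA_bij] .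
  have eB: "card (SB q n \<delta>) = card (SB' q n \<delta>)" using bij_betw_same_card[OF SB_bij] .
  have sumF: "(\<Sum>g\<in>?LRF. 2 ^ F0 q (2*n) (fst g)) * 2 ^ d = card ?LRF * 2 ^ (1 + (q - 1) * n)"
  proof -
    have "(\<Sum>g\<in>?LRF. 2 ^ F0 q (2*n) (fst g)) * 2 ^ d = (\<Sum>g\<in>?LRF. (2::nat) ^ (1 + (q - 1) * n))"
      unfolding sum_distrib_right
    proof (rule sum.cong[OF refl])
      fix g assume g: "g \<in> ?LRF"
      have "cg_order q (2*n) (fst g) = int d"
        using g unfolding labelled_rooted_def \<delta>_def by auto
      then have "F0 q (2*n) (fst g) + d = 1 + (q - 1) * n" using F0_rel[OF q] by blast
      then show "2 ^ F0 q (2*n) (fst g) * 2 ^ d = (2::nat) ^ (1 + (q - 1) * n)"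
        by (metis power_add)
    qed
    then show ?thesis by simp
  qed
  have nq: "n * q = (q - 1) * n + n" using q by (cases q) (simp_all add: algebra_simps)
  have "card ?LRF * 2 ^ (1 + (q - 1) * n) = card ?CLR * 2 ^ (n * q) * 2 ^ d"
    using sumF cardA eA cardA' by simp
  also have "\<dots> = 2 ^ d * 2 ^ ((q - 1) * n) * (card ?CLR * 2 ^ n)"
    unfolding nq power_add by simp
  also have "\<dots> = 2 ^ d * 2 ^ ((q - 1) * n) * (2 * card (labelled_rooted q n \<delta> True))"
    using cardB eB cardB' by simp
  also have "\<dots> = (2 ^ d * card (labelled_rooted q n \<delta> True)) * 2 ^ (1 + (q - 1) * n)"
    by (simp add: power_add)
  finally have "card ?LRF * 2 ^ (1 + (q - 1) * n) = (2 ^ d * card (labelled_rooted q n \<delta> True)) * 2 ^ (1 + (q - 1) * n)" .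
  then show ?thesis unfolding \<delta>_def by simp
qed


definition rel :: "(nat \<Rightarrow> nat) \<Rightarrow> (nat \<Rightarrow> nat \<Rightarrow> nat) \<Rightarrow> (nat \<Rightarrow> nat \<Rightarrow> nat)" where
  "rel \<pi> \<sigma> = (\<lambda>c. \<pi> \<circ> \<sigma> c \<circ> inv \<pi>)"

lemma rt_map: "(a, b) \<in> S\<^sup>* \<Longrightarrow> (f a, f b) \<in> (map_prod f f ` S)\<^sup>*"
proof (induction rule: rtrancl_induct)
  case base then show ?case by simp
next
  case (step y z)
  then have "(f y, f z) \<in> map_prod f f ` S" by force
  then show ?case using step.IH by (rule rtrancl_into_rtrancl[rotated])
qed

lemma rt_map_inv: assumes inj: "inj f" and "(u, v) \<in> (map_prod f f ` S)\<^sup>*"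
  shows "\<And>a b. u = f a \<Longrightarrow> v = f b \<Longrightarrow> (a, b) \<in> S\<^sup>*"
  using assms(2)
proof (induction rule: rtrancl_induct)
  case base
  then have "a = b" using inj by (simp add: inj_eq)
  then show ?case by simp
next
  case (step w v)
  obtain c d where cd: "(c, d) \<in> S" "w = f c" "v = f d" using step.hyps(2) by auto
  have "(a, c) \<in> S\<^sup>*" using step.IH[OF step.prems(1) cd(2)] .
  moreover have "d = b" using cd(3) step.prems(2) inj by (simp add: inj_eq)
  ultimately show ?case using cd(1) by (simp add: rtrancl_into_rtrancl)
qed

context
  fixes \<pi> :: "nat \<Rightarrow> nat" and V :: nat
  assumes perm: "\<pi> permutes {0..<V}"
begin

lemma pi_lt: "(\<pi> x < V) = (x < V)" using permutes_in_image[OF perm, of x] by simp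
lemma pii_lt: "(inv \<pi> x < V) = (x < V)" using permutes_in_image[OF permutes_inv[OF perm], of x] by simp
lemma pi_ge: "\<not> x < V \<Longrightarrow> \<pi> x = x" using permutes_not_in[OF perm, of x] by simp
lemma pii_ge: "\<not> x < V \<Longrightarrow> inv \<pi> x = x" using permutes_not_in[OF permutes_inv[OF perm], of x] by simp
lemma pi_inv1: "\<pi> (inv \<pi> x) = x" using permutes_inverses(1)[OF perm] .
lemma pi_inv2: "inv \<pi> (\<pi> x) = x" using permutes_inverses(2)[OF perm] .
lemma pi_inj: "inj \<pi>" using permutes_inj[OF perm] .

lemma rel_pm: assumes pm: "perfect_matching V f"
  shows "perfect_matching V (\<pi> \<circ> f \<circ> inv \<pi>)"
proof -
  note p = pmD[OF pm]
  show ?thesis unfolding perfect_matching_def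
  proof (intro conjI allI impI)
    fix x assume x: "x < V"
    then have y: "inv \<pi> x < V" using pii_lt by simp
    show "(\<pi> \<circ> f \<circ> inv \<pi>) x < V" using p(1)[OF y] pi_lt by simp
    show "(\<pi> \<circ> f \<circ> inv \<pi>) x \<noteq> x"
    proof
      assume "(\<pi> \<circ> f \<circ> inv \<pi>) x = x"
      then have "\<pi> (f (inv \<pi> x)) = \<pi> (inv \<pi> x)" using pi_inv1 by simp
      then have "f (inv \<pi> x) = inv \<pi> x" using pi_inj by (simp add: inj_eq)
      then show False using p(2)[OF y] by simp
    qed
    show "(\<pi> \<circ> f \<circ> inv \<pi>) ((\<pi> \<circ> f \<circ> inv \<pi>) x) = x" using pi_inv1 pi_inv2 p(3) by simp
  next
    fix x assume "V \<le> x"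
    then have "\<not> x < V" by simp
    then show "(\<pi> \<circ> f \<circ> inv \<pi>) x = x" using pii_ge pi_ge p(4) by simp
  qed
qed

lemma rel_id: "\<pi> \<circ> id \<circ> inv \<pi> = id"
  using pi_inv1 by (simp add: fun_eq_iff)

lemma R2_rel: assumes "perfect_matching V m"
  shows "R2 V (\<pi> \<circ> m \<circ> inv \<pi>) (\<pi> \<circ> t \<circ> inv \<pi>) = map_prod \<pi> \<pi> ` R2 V m t"
proof (rule set_eqI)
  fix p :: "nat \<times> nat"
  obtain a b where ab: "p = (a, b)" by (cases p)
  have "p \<in> R2 V (\<pi> \<circ> m \<circ> inv \<pi>) (\<pi> \<circ> t \<circ> inv \<pi>) \<longleftrightarrow> (inv \<pi> a, inv \<pi> b) \<in> R2 V m t"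
    unfolding ab R2_iff using pii_lt pi_inv1 pi_inv2 by (auto simp: pii_lt) (metis pi_inv2)+
  also have "\<dots> \<longleftrightarrow> p \<in> map_prod \<pi> \<pi> ` R2 V m t"
  proof
    assume "(inv \<pi> a, inv \<pi> b) \<in> R2 V m t"
    then have "map_prod \<pi> \<pi> (inv \<pi> a, inv \<pi> b) \<in> map_prod \<pi> \<pi> ` R2 V m t" by (rule imageI)
    then show "p \<in> map_prod \<pi> \<pi> ` R2 V m t" unfolding ab using pi_inv1 by simp
  next
    assume "p \<in> map_prod \<pi> \<pi> ` R2 V m t"
    then obtain c d where "(c, d) \<in> R2 V m t" "a = \<pi> c" "b = \<pi> d" unfolding ab by auto
    then show "(inv \<pi> a, inv \<pi> b) \<in> R2 V m t" using pi_inv2 by simp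
  qed
  finally show "p \<in> R2 V (\<pi> \<circ> m \<circ> inv \<pi>) (\<pi> \<circ> t \<circ> inv \<pi>) \<longleftrightarrow> p \<in> map_prod \<pi> \<pi> ` R2 V m t" .
qed

lemma quot_rel: assumes pm: "perfect_matching V m" "perfect_matching V t"
  shows "card ({0..<V} // (R2 V (\<pi> \<circ> m \<circ> inv \<pi>) (\<pi> \<circ> t \<circ> inv \<pi>))\<^sup>*) = card ({0..<V} // (R2 V m t)\<^sup>*)"
proof -
  let ?R = "R2 V m t"
  let ?R' = "map_prod \<pi> \<pi> ` ?R"
  have iff: "(\<pi> a, \<pi> b) \<in> ?R'\<^sup>* \<longleftrightarrow> (a, b) \<in> ?R\<^sup>*" for a b
    using rt_map[of a b ?R \<pi>] rt_map_inv[OF pi_inj] by blast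
  have cls: "?R'\<^sup>* `` {\<pi> x} = \<pi> ` (?R\<^sup>* `` {x})" for x
  proof (rule set_eqI)
    fix y
    have "y \<in> ?R'\<^sup>* `` {\<pi> x} \<longleftrightarrow> (\<pi> x, \<pi> (inv \<pi> y)) \<in> ?R'\<^sup>*" using pi_inv1 by simp
    also have "\<dots> \<longleftrightarrow> (x, inv \<pi> y) \<in> ?R\<^sup>*" using iff by blast
    also have "\<dots> \<longleftrightarrow> y \<in> \<pi> ` (?R\<^sup>* `` {x})"
      using pi_inv1 pi_inv2 by (metis Image_singleton_iff image_iff)
    finally show "y \<in> ?R'\<^sup>* `` {\<pi> x} \<longleftrightarrow> y \<in> \<pi> ` (?R\<^sup>* `` {x})" .
  qed
  have Q: "{0..<V} // ?R'\<^sup>* = (\<lambda>K. \<pi> ` K) ` ({0..<V} // ?R\<^sup>*)"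
  proof
    show "{0..<V} // ?R'\<^sup>* \<subseteq> (\<lambda>K. \<pi> ` K) ` ({0..<V} // ?R\<^sup>*)"
    proof
      fix K assume "K \<in> {0..<V} // ?R'\<^sup>*"
      then obtain x where x: "x < V" "K = ?R'\<^sup>* `` {x}" by (auto elim: quotientE)
      have "inv \<pi> x < V" using x pii_lt by simp
      then have "?R\<^sup>* `` {inv \<pi> x} \<in> {0..<V} // ?R\<^sup>*" by (intro quotientI) simp
      moreover have "K = \<pi> ` (?R\<^sup>* `` {inv \<pi> x})" using cls[of "inv \<pi> x"] x pi_inv1 by simp
      ultimately show "K \<in> (\<lambda>K. \<pi> ` K) ` ({0..<V} // ?R\<^sup>*)" by blast
    qed
    show "(\<lambda>K. \<pi> ` K) ` ({0..<V} // ?R\<^sup>*) \<subseteq> {0..<V} // ?R'\<^sup>*"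
    proof
      fix K assume "K \<in> (\<lambda>K. \<pi> ` K) ` ({0..<V} // ?R\<^sup>*)"
      then obtain x where x: "x < V" "K = \<pi> ` (?R\<^sup>* `` {x})" by (auto elim: quotientE)
      have "\<pi> x < V" using x pi_lt by simp
      moreover have "K = ?R'\<^sup>* `` {\<pi> x}" using cls x by simp
      ultimately show "K \<in> {0..<V} // ?R'\<^sup>*" by (auto intro: quotientI)
    qed
  qed
  have inj: "inj_on (\<lambda>K. \<pi> ` K) ({0..<V} // ?R\<^sup>*)"
    by (rule inj_onI) (simp add: inj_image_eq_iff[OF pi_inj])
  show ?thesis unfolding R2_rel[OF pm(1)] Q using card_image[OF inj] .
qed

end


context
  fixes \<pi> :: "nat \<Rightarrow> nat" and V :: nat
  assumes perm: "\<pi> permutes {0..<V}"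
begin

lemma rel_cg: assumes cg: "colored_graph q V \<sigma>"
  shows "colored_graph q V (rel \<pi> \<sigma>)"
  unfolding colored_graph_def
proof (intro conjI allI impI)
  show "0 < V" using cgD(1)[OF cg] .
  fix c
  show "c \<le> q \<Longrightarrow> perfect_matching V (rel \<pi> \<sigma> c)"
    unfolding rel_def using rel_pm[OF perm cgD(2)[OF cg]] by simp
  show "q < c \<Longrightarrow> rel \<pi> \<sigma> c = id"
    unfolding rel_def using cgD(3)[OF cg] rel_id[OF perm] by simp
next
  have sub: "map_prod \<pi> \<pi> ` cg_edges q V \<sigma> \<subseteq> cg_edges q V (rel \<pi> \<sigma>)"
  proof
    fix p assume "p \<in> map_prod \<pi> \<pi> ` cg_edges q V \<sigma>"
    then obtain x c where xc: "x < V" "c \<le> q" "p = (\<pi> x, \<pi> (\<sigma> c x))" unfolding cg_edges_def by auto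
    have "\<pi> x < V" using xc pi_lt[OF perm] by simp
    moreover have "\<pi> (\<sigma> c x) = rel \<pi> \<sigma> c (\<pi> x)" unfolding rel_def using pi_inv2[OF perm] by simp
    ultimately show "p \<in> cg_edges q V (rel \<pi> \<sigma>)" unfolding cg_edges_def using xc by blast
  qed
  show "cg_connected q V (rel \<pi> \<sigma>)"
    unfolding cg_connected_def
  proof (intro allI impI)
    fix x y assume x: "x < V" and y: "y < V"
    then have "inv \<pi> x < V" "inv \<pi> y < V" using pii_lt[OF perm] by auto
    then have "(inv \<pi> x, inv \<pi> y) \<in> (cg_edges q V \<sigma>)\<^sup>*" using cgD(4)[OF cg] unfolding cg_connected_def by blast
    then have "(\<pi> (inv \<pi> x), \<pi> (inv \<pi> y)) \<in> (map_prod \<pi> \<pi> ` cg_edges q V \<sigma>)\<^sup>*" by (rule rt_map)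
    then have "(x, y) \<in> (map_prod \<pi> \<pi> ` cg_edges q V \<sigma>)\<^sup>*" using pi_inv1[OF perm] by simp
    then show "(x, y) \<in> (cg_edges q V (rel \<pi> \<sigma>))\<^sup>*" using rtrancl_mono[OF sub] by blast
  qed
qed

lemma rel_order: assumes cg: "colored_graph q V \<sigma>"
  shows "cg_order q V (rel \<pi> \<sigma>) = cg_order q V \<sigma>"
proof -
  have "bicoloured_cycles V (rel \<pi> \<sigma>) i = bicoloured_cycles V \<sigma> i" if i: "i \<in> {1..q}" for i
  proof -
    have "perfect_matching V (\<sigma> 0)" "perfect_matching V (\<sigma> i)" using cgD(2)[OF cg] i by auto
    then show ?thesis unfolding bc_R2 rel_def using quot_rel[OF perm] by simp
  qed
  then have "F0 q V (rel \<pi> \<sigma>) = F0 q V \<sigma>" unfolding F0_def by (rule sum.cong[OF refl])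
  then show ?thesis unfolding cg_order_def by simp
qed

lemma rel_bip: assumes cg: "colored_graph q V \<sigma>" and b: "cg_bipartite q V \<sigma>"
  shows "cg_bipartite q V (rel \<pi> \<sigma>)"
proof -
  obtain black :: "nat \<Rightarrow> bool" where bl: "\<forall>c\<le>q. \<forall>x<V. black (\<sigma> c x) \<noteq> black x"
    using b unfolding cg_bipartite_def by blast
  have "\<forall>c\<le>q. \<forall>x<V. (black \<circ> inv \<pi>) (rel \<pi> \<sigma> c x) \<noteq> (black \<circ> inv \<pi>) x"
  proof (intro allI impI)
    fix c x assume c: "c \<le> q" and x: "x < V"
    have "inv \<pi> x < V" using x pii_lt[OF perm] by simp
    then show "(black \<circ> inv \<pi>) (rel \<pi> \<sigma> c x) \<noteq> (black \<circ> inv \<pi>) x"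
      unfolding rel_def using bl c pi_inv2[OF perm] by simp
  qed
  then show ?thesis unfolding cg_bipartite_def by (intro exI[of _ "black \<circ> inv \<pi>"])
qed

end

lemma rel_LR: assumes perm: "\<pi> permutes {0..<2*n}" and g: "(\<sigma>, r) \<in> labelled_rooted q n \<delta> b"
  shows "(rel \<pi> \<sigma>, \<pi> r) \<in> labelled_rooted q n \<delta> b"
proof -
  have cg: "colored_graph q (2*n) \<sigma>" and r: "r < 2*n" and o: "cg_order q (2*n) \<sigma> = \<delta>"
    and bp: "b \<longrightarrow> cg_bipartite q (2*n) \<sigma>" using g unfolding LR_mem by auto
  show ?thesis unfolding LR_mem
    using rel_cg[OF perm cg] pi_lt[OF perm] r rel_order[OF perm cg] o rel_bip[OF perm cg] bp by simp
qed


lemma iso_rel: assumes perm: "\<pi> permutes {0..<V}"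
  shows "rooted_iso q V (\<sigma>, r) (rel \<pi> \<sigma>, \<pi> r)"
  unfolding rooted_iso_def
proof (intro exI[of _ \<pi>] conjI allI impI)
  show "bij_betw \<pi> {0..<V} {0..<V}" using permutes_imp_bij[OF perm] .
  show "\<pi> (snd (\<sigma>, r)) = snd (rel \<pi> \<sigma>, \<pi> r)" by simp
  fix c x
  show "\<pi> (fst (\<sigma>, r) c x) = fst (rel \<pi> \<sigma>, \<pi> r) c (\<pi> x)"
    unfolding rel_def using pi_inv2[OF perm] by simp
qed

lemma iso_perm: assumes g: "(\<sigma>, r) \<in> labelled_rooted q n \<delta> b" and h: "(\<tau>, r') \<in> labelled_rooted q n \<delta> b"
  and iso: "rooted_iso q (2*n) (\<sigma>, r) (\<tau>, r')"
  shows "\<exists>\<pi>. \<pi> permutes {0..<2*n} \<and> (\<tau>, r') = (rel \<pi> \<sigma>, \<pi> r)"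
proof -
  define V where "V = 2*n"
  have cg: "colored_graph q V \<sigma>" and r: "r < V" using g unfolding LR_mem V_def by auto
  have cg': "colored_graph q V \<tau>" using h unfolding LR_mem V_def by auto
  obtain \<rho> where \<rho>: "bij_betw \<rho> {0..<V} {0..<V}" "\<rho> r = r'" "\<forall>c\<le>q. \<forall>x<V. \<rho> (\<sigma> c x) = \<tau> c (\<rho> x)"
    using iso unfolding rooted_iso_def V_def fst_conv snd_conv by blast
  define \<pi> where "\<pi> x = (if x < V then \<rho> x else x)" for x
  have bij: "bij_betw \<pi> {0..<V} {0..<V}" using \<rho>(1) by (rule bij_betw_cong[THEN iffD1, rotated]) (simp add: \<pi>_def)
  have perm: "\<pi> permutes {0..<V}" by (rule bij_imp_permutes[OF bij]) (simp add: \<pi>_def)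
  have "\<tau> = rel \<pi> \<sigma>"
  proof (intro ext)
    fix c x
    show "\<tau> c x = rel \<pi> \<sigma> c x"
    proof (cases "c \<le> q")
      case False
      then have "q < c" by simp
      then have "\<tau> c = id" "\<sigma> c = id" using cgD(3)[OF cg'] cgD(3)[OF cg] by blast+
      then show ?thesis unfolding rel_def using rel_id[OF perm] by simp
    next
      case True
      note pm = pmD[OF cgD(2)[OF cg True]] and pm' = pmD[OF cgD(2)[OF cg' True]]
      show ?thesis
      proof (cases "x < V")
        case True
        define y where "y = inv \<pi> x"
        have y: "y < V" "\<pi> y = x" unfolding y_def using pii_lt[OF perm] True pi_inv1[OF perm] by auto
        have "rel \<pi> \<sigma> c x = \<pi> (\<sigma> c y)" unfolding rel_def y_def by simp
        also have "\<dots> = \<rho> (\<sigma> c y)" unfolding \<pi>_def using pm(1)[OF y(1)] by simp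
        also have "\<dots> = \<tau> c (\<rho> y)" using \<rho>(3) \<open>c \<le> q\<close> y(1) by blast
        also have "\<dots> = \<tau> c x" using y unfolding \<pi>_def by simp
        finally show ?thesis by simp
      next
        case False
        have "rel \<pi> \<sigma> c x = x" unfolding rel_def using False pii_ge[OF perm] pi_ge[OF perm] pm(4) by simp
        then show ?thesis using pm'(4) False by simp
      qed
    qed
  qed
  moreover have "r' = \<pi> r" using \<rho>(2) r unfolding \<pi>_def by simp
  ultimately show ?thesis using perm unfolding V_def by blast
qed

lemma perm_uniq: assumes g: "(\<sigma>, r) \<in> labelled_rooted q n \<delta> b"
  and p1: "\<pi>1 permutes {0..<2*n}" and p2: "\<pi>2 permutes {0..<2*n}"
  and eq: "(rel \<pi>1 \<sigma>, \<pi>1 r) = (rel \<pi>2 \<sigma>, \<pi>2 r)"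
  shows "\<pi>1 = \<pi>2"
proof -
  define V where "V = 2*n"
  have cg: "colored_graph q V \<sigma>" and r: "r < V" using g unfolding LR_mem V_def by auto
  define E where "E = {x. \<pi>1 x = \<pi>2 x}"
  have cl: "(a, b) \<in> cg_edges q V \<sigma> \<Longrightarrow> a \<in> E \<Longrightarrow> b \<in> E" for a b
  proof -
    assume ab: "(a, b) \<in> cg_edges q V \<sigma>" and a: "a \<in> E"
    then obtain c where c: "c \<le> q" "a < V" "b = \<sigma> c a" unfolding cg_edges_def by blast
    have "\<pi>1 (\<sigma> c a) = rel \<pi>1 \<sigma> c (\<pi>1 a)" unfolding rel_def using pi_inv2[OF p1] by simp
    also have "\<dots> = rel \<pi>2 \<sigma> c (\<pi>2 a)" using eq a unfolding E_def by simp
    also have "\<dots> = \<pi>2 (\<sigma> c a)" unfolding rel_def using pi_inv2[OF p2] by simp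
    finally show "b \<in> E" unfolding E_def c(3) by simp
  qed
  have rE: "r \<in> E" using eq unfolding E_def by simp
  have inE: "x \<in> E" if x: "x < V" for x
  proof -
    have "(r, x) \<in> (cg_edges q V \<sigma>)\<^sup>*" using cgD(4)[OF cg] r x unfolding cg_connected_def by blast
    then show ?thesis
    proof (induction rule: rtrancl_induct)
      case base show ?case using rE .
    next
      case (step y z) show ?case using cl[OF step(2) step(3)] .
    qed
  qed
  show ?thesis
  proof (rule ext)
    fix x show "\<pi>1 x = \<pi>2 x"
    proof (cases "x < V")
      case True
      then show ?thesis using inE[OF True] unfolding E_def by simp
    next
      case False
      then show ?thesis using pi_ge[OF p1, of x] pi_ge[OF p2, of x] unfolding V_def by simp
    qed
  qed
qed

lemma rel_inv: assumes perm: "\<pi> permutes S" shows "rel (inv \<pi>) (rel \<pi> \<sigma>) = \<sigma>"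
proof -
  have b: "bij \<pi>" using permutes_bij[OF perm] .
  show ?thesis unfolding rel_def inv_inv_eq[OF b]
    using permutes_inverses[OF perm] by (simp add: fun_eq_iff)
qed

lemma rel_comp: assumes p1: "\<pi>1 permutes S" and p2: "\<pi>2 permutes S"
  shows "rel \<pi>2 (rel \<pi>1 \<sigma>) = rel (\<pi>2 \<circ> \<pi>1) \<sigma>"
  unfolding rel_def o_inv_distrib[OF permutes_bij[OF p2] permutes_bij[OF p1]]
  by (simp add: fun_eq_iff)


definition IsoR :: "nat \<Rightarrow> nat \<Rightarrow> int \<Rightarrow> bool \<Rightarrow> (((nat \<Rightarrow> nat \<Rightarrow> nat) \<times> nat) \<times> ((nat \<Rightarrow> nat \<Rightarrow> nat) \<times> nat)) set" where
  "IsoR q n \<delta> b = {(g, h). g \<in> labelled_rooted q n \<delta> b \<and> h \<in> labelled_rooted q n \<delta> b \<and> rooted_iso q (2*n) g h}"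

lemma iso_classes_eq: "iso_classes q n \<delta> b = labelled_rooted q n \<delta> b // IsoR q n \<delta> b"
  unfolding iso_classes_def IsoR_def ..

lemma IsoR_iff: "(g, h) \<in> IsoR q n \<delta> b \<longleftrightarrow> g \<in> labelled_rooted q n \<delta> b \<and> h \<in> labelled_rooted q n \<delta> b \<and>
    (\<exists>\<pi>. \<pi> permutes {0..<2*n} \<and> h = (rel \<pi> (fst g), \<pi> (snd g)))"
proof -
  obtain \<sigma> r where g: "g = (\<sigma>, r)" by (cases g)
  obtain \<tau> r' where h: "h = (\<tau>, r')" by (cases h)
  show ?thesis
  proof
    assume "(g, h) \<in> IsoR q n \<delta> b"
    then have a: "g \<in> labelled_rooted q n \<delta> b" "h \<in> labelled_rooted q n \<delta> b" "rooted_iso q (2*n) g h"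
      unfolding IsoR_def by auto
    then show "g \<in> labelled_rooted q n \<delta> b \<and> h \<in> labelled_rooted q n \<delta> b \<and>
      (\<exists>\<pi>. \<pi> permutes {0..<2*n} \<and> h = (rel \<pi> (fst g), \<pi> (snd g)))"
      using iso_perm[of \<sigma> r q n \<delta> b \<tau> r'] unfolding g h by simp
  next
    assume a: "g \<in> labelled_rooted q n \<delta> b \<and> h \<in> labelled_rooted q n \<delta> b \<and>
      (\<exists>\<pi>. \<pi> permutes {0..<2*n} \<and> h = (rel \<pi> (fst g), \<pi> (snd g)))"
    then obtain \<pi> where "\<pi> permutes {0..<2*n}" "h = (rel \<pi> (fst g), \<pi> (snd g))" by blast
    then have "rooted_iso q (2*n) g h" unfolding g using iso_rel by simp
    then show "(g, h) \<in> IsoR q n \<delta> b" using a unfolding IsoR_def by simp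
  qed
qed

lemma IsoR_equiv: "equiv (labelled_rooted q n \<delta> b) (IsoR q n \<delta> b)"
proof (rule equivI)
  show "IsoR q n \<delta> b \<subseteq> labelled_rooted q n \<delta> b \<times> labelled_rooted q n \<delta> b"
    unfolding IsoR_def by auto
  show "refl_on (labelled_rooted q n \<delta> b) (IsoR q n \<delta> b)"
  proof (rule refl_onI)
    fix g assume g: "g \<in> labelled_rooted q n \<delta> b"
    have "id permutes {0..<2*n}" by (rule permutes_id)
    moreover have "g = (rel id (fst g), id (snd g))" unfolding rel_def by simp
    ultimately show "(g, g) \<in> IsoR q n \<delta> b" unfolding IsoR_iff using g by blast
  qed
  show "sym (IsoR q n \<delta> b)"
  proof (rule symI)
    fix g h assume "(g, h) \<in> IsoR q n \<delta> b"
    then obtain \<pi> where a: "g \<in> labelled_rooted q n \<delta> b" "h \<in> labelled_rooted q n \<delta> b"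
      "\<pi> permutes {0..<2*n}" "h = (rel \<pi> (fst g), \<pi> (snd g))" unfolding IsoR_iff by blast
    have "inv \<pi> permutes {0..<2*n}" using permutes_inv[OF a(3)] .
    moreover have "g = (rel (inv \<pi>) (fst h), inv \<pi> (snd h))"
      unfolding a(4) using rel_inv[OF a(3)] permutes_inverses(2)[OF a(3)] by (cases g) simp
    ultimately show "(h, g) \<in> IsoR q n \<delta> b" unfolding IsoR_iff using a(1,2) by blast
  qed
  show "trans (IsoR q n \<delta> b)"
  proof (rule transI)
    fix g h k assume "(g, h) \<in> IsoR q n \<delta> b" "(h, k) \<in> IsoR q n \<delta> b"
    then obtain \<pi>1 \<pi>2 where a: "g \<in> labelled_rooted q n \<delta> b" "k \<in> labelled_rooted q n \<delta> b"
      "\<pi>1 permutes {0..<2*n}" "h = (rel \<pi>1 (fst g), \<pi>1 (snd g))"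
      "\<pi>2 permutes {0..<2*n}" "k = (rel \<pi>2 (fst h), \<pi>2 (snd h))" unfolding IsoR_iff by blast
    have "\<pi>2 \<circ> \<pi>1 permutes {0..<2*n}" using permutes_compose[OF a(3) a(5)] .
    moreover have "k = (rel (\<pi>2 \<circ> \<pi>1) (fst g), (\<pi>2 \<circ> \<pi>1) (snd g))"
      unfolding a(6) a(4) using rel_comp[OF a(3) a(5)] by simp
    ultimately show "(g, k) \<in> IsoR q n \<delta> b" unfolding IsoR_iff using a(1,2) by blast
  qed
qed

lemma class_card: assumes g: "g \<in> labelled_rooted q n \<delta> b"
  shows "card (IsoR q n \<delta> b `` {g}) = fact (2*n)"
proof -
  obtain \<sigma> r where gs: "g = (\<sigma>, r)" by (cases g)
  have eq: "IsoR q n \<delta> b `` {g} = (\<lambda>\<pi>. (rel \<pi> \<sigma>, \<pi> r)) ` {\<pi>. \<pi> permutes {0..<2*n}}"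
  proof
    show "IsoR q n \<delta> b `` {g} \<subseteq> (\<lambda>\<pi>. (rel \<pi> \<sigma>, \<pi> r)) ` {\<pi>. \<pi> permutes {0..<2*n}}"
    proof
      fix h assume "h \<in> IsoR q n \<delta> b `` {g}"
      then have "(g, h) \<in> IsoR q n \<delta> b" by simp
      then obtain \<pi> where "\<pi> permutes {0..<2*n}" "h = (rel \<pi> (fst g), \<pi> (snd g))"
        unfolding IsoR_iff by blast
      then show "h \<in> (\<lambda>\<pi>. (rel \<pi> \<sigma>, \<pi> r)) ` {\<pi>. \<pi> permutes {0..<2*n}}" unfolding gs by simp
    qed
    show "(\<lambda>\<pi>. (rel \<pi> \<sigma>, \<pi> r)) ` {\<pi>. \<pi> permutes {0..<2*n}} \<subseteq> IsoR q n \<delta> b `` {g}"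
    proof
      fix h assume "h \<in> (\<lambda>\<pi>. (rel \<pi> \<sigma>, \<pi> r)) ` {\<pi>. \<pi> permutes {0..<2*n}}"
      then obtain \<pi> where p: "\<pi> permutes {0..<2*n}" "h = (rel \<pi> \<sigma>, \<pi> r)" by blast
      have "h \<in> labelled_rooted q n \<delta> b" using rel_LR[OF p(1)] g gs p(2) by simp
      then show "h \<in> IsoR q n \<delta> b `` {g}" unfolding Image_singleton_iff IsoR_iff using g gs p by auto
    qed
  qed
  have inj: "inj_on (\<lambda>\<pi>. (rel \<pi> \<sigma>, \<pi> r)) {\<pi>. \<pi> permutes {0..<2*n}}"
  proof (rule inj_onI)
    fix \<pi>1 \<pi>2 assume "\<pi>1 \<in> {\<pi>. \<pi> permutes {0..<2*n}}" "\<pi>2 \<in> {\<pi>. \<pi> permutes {0..<2*n}}"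
      "(rel \<pi>1 \<sigma>, \<pi>1 r) = (rel \<pi>2 \<sigma>, \<pi>2 r)"
    then show "\<pi>1 = \<pi>2" using perm_uniq[of \<sigma> r q n \<delta> b] g gs by simp
  qed
  show ?thesis unfolding eq card_image[OF inj] by (rule card_permutations) simp_all
qed

lemma card_LR_classes: "card (labelled_rooted q n \<delta> b) = fact (2*n) * card (iso_classes q n \<delta> b)"
proof -
  let ?A = "labelled_rooted q n \<delta> b"
  let ?R = "IsoR q n \<delta> b"
  have eqv: "equiv ?A ?R" by (rule IsoR_equiv)
  have finA: "finite ?A" by (rule fin_LR)
  have finC: "finite (?A // ?R)" using finite_quotient[OF finA] eqv unfolding equiv_def by blast
  have U: "\<Union>(?A // ?R) = ?A" using Union_quotient[OF eqv] .
  have cards: "\<forall>K\<in>?A // ?R. card K = fact (2*n)"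
  proof
    fix K assume "K \<in> ?A // ?R"
    then obtain g where "g \<in> ?A" "K = ?R `` {g}" by (auto elim: quotientE)
    then show "card K = fact (2*n)" using class_card by simp
  qed
  have disj: "\<forall>K1\<in>?A // ?R. \<forall>K2\<in>?A // ?R. K1 \<noteq> K2 \<longrightarrow> K1 \<inter> K2 = {}"
    using quotient_disj[OF eqv] by blast
  have "fact (2*n) * card (?A // ?R) = card (\<Union>(?A // ?R))"
  proof (rule card_partition[OF finC])
    show "finite (\<Union>(?A // ?R))" using U finA by simp
    show "\<And>c. c \<in> ?A // ?R \<Longrightarrow> card c = fact (2*n)" using cards by blast
    show "\<And>c1 c2. c1 \<in> ?A // ?R \<Longrightarrow> c2 \<in> ?A // ?R \<Longrightarrow> c1 \<noteq> c2 \<Longrightarrow> c1 \<inter> c2 = {}" using disj by blast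
  qed
  then show ?thesis unfolding U iso_classes_eq by simp
qed

theorem mainTheorem2:
  fixes q n \<delta> :: nat
  assumes "2 \<le> q" and "1 \<le> n"
  shows "num_rooted q n (int \<delta>) = 2 ^ \<delta> * num_bipartite q n (int \<delta>)"
proof -
  have q: "1 \<le> q" using assms(1) by simp
  have "fact (2*n) * num_rooted q n (int \<delta>) = card (labelled_rooted q n (int \<delta>) False)"
    unfolding num_rooted_def card_LR_classes ..
  also have "\<dots> = 2 ^ \<delta> * card (labelled_rooted q n (int \<delta>) True)" using labelled_main[OF q] .
  also have "\<dots> = fact (2*n) * (2 ^ \<delta> * num_bipartite q n (int \<delta>))"
    unfolding num_bipartite_def card_LR_classes by simp
  finally show ?thesis by simp
qed


end
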